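(* Assume A2. Let $0w1$ be a valid word (with $w$ a possibly empty word). Then for $x\in\mathcal I$: $0w1$ is the $x$-threshold word if and only if $x\in[y_{01w},y_{10w}]$. Moreover, if $x\in\mathcal I$ and $x\ge y_0$, then the $x$-threshold word is $0$; if $x\in\mathcal I$ and $x\le y_1$, then the $x$-threshold word is $1$.
   Context: Words are finite strings over $\{0,1\}$; $\epsilon$ is the empty word, $w^\omega$ the infinite repetition of $w$. Let $\mathcal I\subseteq\mathbb R$ be an interval and $\phi_0,\phi_1:\mathcal I\to\mathcal I$. For a word $w$ put $\phi_w:=\phi_{w_{|w|}}\circ\cdots\circ\phi_{w_1}$ (first letter applied first), $\phi_\epsilon=\mathrm{id}$. Assumption A2: for all $x<y$ in $\mathcal I$ and $k\in\{0,1\}$, $\phi_k(x)<\phi_k(y)$ and $\phi_k(y)-\phi_k(x)<y-x$; moreover $\phi_0,\phi_1$ have fixed points $y_0,y_1\in\mathcal I$ with $y_1<y_0$. Under A2, for every non-empty word $u$ the map $\phi_u$ has a unique fixed point in $\mathcal I$, denoted $y_u$. The $x$-threshold orbit is the sequence $(x_k)_{k\ge1}$ with $x_1=\phi_1(x)$ and $x_{k+1}=\phi_1(x_k)$ if $x_k\ge x$, $x_{k+1}=\phi_0(x_k)$ if $x_k<x$. The $x$-threshold word is the shortest non-empty finite word $\pi$ such that $x_{k+1}=\phi_{(\pi^\omega)_k}(x_k)$ for all $k\ge1$, when such a word exists. For $p\ge1$, $L_p,R_p$ are the word morphisms determined by $L_p(0)=0^{p+1}1$, $L_p(1)=0^p1$,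 $R_p(0)=01^p$, $R_p(1)=01^{p+1}$. The set of valid words is the smallest set of words containing $0$ and $1$ and closed under $L_p$ and $R_p$ for all $p\ge1$; every valid word other than $0,1$ has the form $0w1$. *)

theory Defs
  imports "HOL-Analysis.Analysis"
begin

text \<open>Words over {0,1} are encoded as bool lists: False = letter 0, True = letter 1.
  The two maps are given as one function phi :: bool => real => real,
  phi False = phi_0, phi True = phi_1.\<close>

type_synonym word = "bool list"

text \<open>phi_w = phi_{w_n} o ... o phi_{w_1} (first letter applied first).\<close>
fun phiw :: "(bool \<Rightarrow> real \<Rightarrow> real) \<Rightarrow> word \<Rightarrow> real \<Rightarrow> real" where
  "phiw phi [] = id"
| "phiw phi (a # w) = phiw phi w \<circ> phi a"

definition A2 :: "real set \<Rightarrow> (bool \<Rightarrow> real \<Rightarrow> real) \<Rightarrow> real \<Rightarrow> real \<Rightarrow> bool" where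
  "A2 I phi y0 y1 \<longleftrightarrow>
     is_interval I \<and>
     (\<forall>k. phi k ` I \<subseteq> I) \<and>
     (\<forall>k. \<forall>x\<in>I. \<forall>y\<in>I. x < y \<longrightarrow> phi k x < phi k y \<and> phi k y - phi k x < y - x) \<and>
     y0 \<in> I \<and> y1 \<in> I \<and> phi False y0 = y0 \<and> phi True y1 = y1 \<and> y1 < y0"

text \<open>y_u: the (unique, under A2) fixed point of phi_u in I.\<close>
definition fixpt :: "real set \<Rightarrow> (bool \<Rightarrow> real \<Rightarrow> real) \<Rightarrow> word \<Rightarrow> real" where
  "fixpt I phi u = (THE y. y \<in> I \<and> phiw phi u y = y)"

text \<open>x-threshold orbit: thr_orbit phi x k = x_k for k >= 1 (x_0 = x, so that x_1 = phi_1 x).\<close>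
fun thr_orbit :: "(bool \<Rightarrow> real \<Rightarrow> real) \<Rightarrow> real \<Rightarrow> nat \<Rightarrow> real" where
  "thr_orbit phi x 0 = x"
| "thr_orbit phi x (Suc k) = phi (x \<le> thr_orbit phi x k) (thr_orbit phi x k)"

text \<open>pi generates the orbit: x_{k+1} = phi_{(pi^omega)_k}(x_k) for all k >= 1
  ((pi^omega)_k is the k-th letter, 1-indexed).\<close>
definition generates :: "(bool \<Rightarrow> real \<Rightarrow> real) \<Rightarrow> real \<Rightarrow> word \<Rightarrow> bool" where
  "generates phi x p \<longleftrightarrow> p \<noteq> [] \<and>
     (\<forall>k\<ge>1. thr_orbit phi x (Suc k) = phi (p ! ((k - 1) mod length p)) (thr_orbit phi x k))"

definition is_threshold_word :: "(bool \<Rightarrow> real \<Rightarrow> real) \<Rightarrow> real \<Rightarrow> word \<Rightarrow> bool" where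
  "is_threshold_word phi x p \<longleftrightarrow> generates phi x p \<and>
     (\<forall>q. generates phi x q \<and> q \<noteq> p \<longrightarrow> length p < length q)"

definition Lmor :: "nat \<Rightarrow> word \<Rightarrow> word" where
  "Lmor p w = concat (map (\<lambda>b. if b then replicate p False @ [True]
                                   else replicate (p + 1) False @ [True]) w)"

definition Rmor :: "nat \<Rightarrow> word \<Rightarrow> word" where
  "Rmor p w = concat (map (\<lambda>b. if b then False # replicate (p + 1) True
                                   else False # replicate p True) w)"

inductive valid :: "word \<Rightarrow> bool" where
  valid0: "valid [False]"
| valid1: "valid [True]"
| validL: "valid w \<Longrightarrow> p \<ge> 1 \<Longrightarrow> valid (Lmor p w)"
| validR: "valid w \<Longrightarrow> p \<ge> 1 \<Longrightarrow> valid (Rmor p w)"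

end

theory Submission
  imports Defs
begin

lemma phiw_append[simp]: "phiw phi (a @ b) = phiw phi b \<circ> phiw phi a"
  by (induction a) auto

lemma phiw_snoc: "phiw phi (a @ [c]) z = phi c (phiw phi a z)"
  by simp

locale sys =
  fixes I :: "real set" and phi :: "bool \<Rightarrow> real \<Rightarrow> real" and y0 y1 :: real
  assumes A2: "A2 I phi y0 y1"
begin

lemma intv: "is_interval I" using A2 unfolding A2_def by auto
lemma maps: "z \<in> I \<Longrightarrow> phi k z \<in> I" using A2 unfolding A2_def by auto
lemma mono1: "x \<in> I \<Longrightarrow> y \<in> I \<Longrightarrow> x < y \<Longrightarrow> phi k x < phi k y" using A2 unfolding A2_def by auto
lemma contr1: "x \<in> I \<Longrightarrow> y \<in> I \<Longrightarrow> x < y \<Longrightarrow> phi k y - phi k x < y - x" using A2 unfolding A2_def by auto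
lemma y0I: "y0 \<in> I" and y1I: "y1 \<in> I" and fix0: "phi False y0 = y0" and fix1: "phi True y1 = y1"
  and y10: "y1 < y0"
  using A2 unfolding A2_def by auto

lemma inI: "a \<in> I \<Longrightarrow> c \<in> I \<Longrightarrow> a \<le> b \<Longrightarrow> b \<le> c \<Longrightarrow> b \<in> I"
  using mem_is_interval_1_I[OF intv] by blast

lemma seg_I: "y1 \<le> z \<Longrightarrow> z \<le> y0 \<Longrightarrow> z \<in> I"
  using inI[OF y1I y0I] by blast

lemma phiw_in: "z \<in> I \<Longrightarrow> phiw phi W z \<in> I"
  by (induction W arbitrary: z) (auto simp: maps)

lemma phiw_mono: "x \<in> I \<Longrightarrow> y \<in> I \<Longrightarrow> x < y \<Longrightarrow> phiw phi W x < phiw phi W y"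
  by (induction W arbitrary: x y) (auto simp: maps mono1)

lemma phiw_le_iff: "x \<in> I \<Longrightarrow> y \<in> I \<Longrightarrow> phiw phi W x \<le> phiw phi W y \<longleftrightarrow> x \<le> y"
  using phiw_mono[of x y W] phiw_mono[of y x W] by (cases x y rule: linorder_cases) auto

lemma phiw_less_iff: "x \<in> I \<Longrightarrow> y \<in> I \<Longrightarrow> phiw phi W x < phiw phi W y \<longleftrightarrow> x < y"
  using phiw_le_iff by (meson linorder_not_le)

lemma phiw_le: "x \<in> I \<Longrightarrow> y \<in> I \<Longrightarrow> x \<le> y \<Longrightarrow> phiw phi W x \<le> phiw phi W y"
  using phiw_le_iff by blast

lemma phiw_eq_iff: "x \<in> I \<Longrightarrow> y \<in> I \<Longrightarrow> phiw phi W x = phiw phi W y \<longleftrightarrow> x = y"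
  using phiw_le_iff[of x y W] phiw_le_iff[of y x W] by (metis order.refl order.antisym)

lemma phiw_contr_le: "x \<in> I \<Longrightarrow> y \<in> I \<Longrightarrow> x < y \<Longrightarrow> phiw phi W y - phiw phi W x \<le> y - x"
proof (induction W arbitrary: x y)
  case Nil then show ?case by simp
next
  case (Cons a W)
  have "phi a x < phi a y" "phi a y - phi a x < y - x" using Cons.prems mono1 contr1 by auto
  then show ?case using Cons.IH[of "phi a x" "phi a y"] Cons.prems maps by fastforce
qed

lemma phiw_contr: "x \<in> I \<Longrightarrow> y \<in> I \<Longrightarrow> x < y \<Longrightarrow> W \<noteq> [] \<Longrightarrow> phiw phi W y - phiw phi W x < y - x"
proof (cases W)
  case (Cons a W')
  assume h: "x \<in> I" "y \<in> I" "x < y"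
  have "phi a x < phi a y" "phi a y - phi a x < y - x" using h mono1 contr1 by auto
  then show ?thesis using phiw_contr_le[of "phi a x" "phi a y" W'] h maps Cons by fastforce
qed simp

lemma phiw_lip: "1-lipschitz_on I (phiw phi W)"
proof (rule lipschitz_onI)
  fix x y assume h: "x \<in> I" "y \<in> I"
  show "dist (phiw phi W x) (phiw phi W y) \<le> 1 * dist x y"
  proof (cases x y rule: linorder_cases)
    case less then show ?thesis using phiw_contr_le[OF h less, of W] phiw_mono[OF h less, of W]
      by (simp add: dist_real_def)
  next
    case greater then show ?thesis using phiw_contr_le[OF h(2,1) greater, of W] phiw_mono[OF h(2,1) greater, of W]
      by (simp add: dist_real_def)
  qed simp
qed simp

lemma phiw_cont: "continuous_on S (phiw phi W)" if "S \<subseteq> I"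
  using lipschitz_on_continuous_on[OF lipschitz_on_subset[OF phiw_lip that]] .

lemma phi0_ge: "z \<in> I \<Longrightarrow> z \<le> y0 \<Longrightarrow> z \<le> phi False z"
  using contr1[of z y0 False] fix0 y0I by (cases "z = y0") auto
lemma phi0_gt: "z \<in> I \<Longrightarrow> z < y0 \<Longrightarrow> z < phi False z"
  using contr1[of z y0 False] fix0 y0I by auto
lemma phi0_le: "z \<in> I \<Longrightarrow> y0 \<le> z \<Longrightarrow> phi False z \<le> z"
  using contr1[of y0 z False] fix0 y0I by (cases "z = y0") auto
lemma phi1_le: "z \<in> I \<Longrightarrow> y1 \<le> z \<Longrightarrow> phi True z \<le> z"
  using contr1[of y1 z True] fix1 y1I by (cases "z = y1") auto
lemma phi1_lt: "z \<in> I \<Longrightarrow> y1 < z \<Longrightarrow> phi True z < z"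
  using contr1[of y1 z True] fix1 y1I by auto
lemma phi1_ge: "z \<in> I \<Longrightarrow> z \<le> y1 \<Longrightarrow> z \<le> phi True z"
  using contr1[of z y1 True] fix1 y1I by (cases "z = y1") auto

lemma phi_box: "y1 \<le> z \<Longrightarrow> z \<le> y0 \<Longrightarrow> y1 \<le> phi k z \<and> phi k z \<le> y0"
proof -
  assume h: "y1 \<le> z" "z \<le> y0"
  have zI: "z \<in> I" using seg_I h .
  show ?thesis
  proof (cases k)
    case True
    have "phi True z \<le> z" using phi1_le zI h by auto
    moreover have "y1 \<le> phi True z" using phiw_le[OF y1I zI h(1), of "[True]"] fix1 by simp
    ultimately show ?thesis using True h by auto
  next
    case False
    have "z \<le> phi False z" using phi0_ge zI h by auto
    moreover have "phi False z \<le> y0" using phiw_le[OF zI y0I h(2), of "[False]"] fix0 by simp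
    ultimately show ?thesis using False h by auto
  qed
qed

lemma phiw_box: "y1 \<le> z \<Longrightarrow> z \<le> y0 \<Longrightarrow> y1 \<le> phiw phi W z \<and> phiw phi W z \<le> y0"
  by (induction W arbitrary: z) (auto dest: phi_box)

lemma phi_sep: "y1 \<le> z \<Longrightarrow> z \<le> y0 \<Longrightarrow> phi True z < phi False z"
proof -
  assume h: "y1 \<le> z" "z \<le> y0"
  have zI: "z \<in> I" using seg_I h .
  show ?thesis
  proof (cases "z = y1")
    case True
    then show ?thesis using fix1 phi0_gt[OF y1I y10] by simp
  next
    case False
    then have "phi True z < z" using phi1_lt zI h by auto
    then show ?thesis using phi0_ge[OF zI h(2)] by linarith
  qed
qed

end

lemma phiw_replicate_add: "phiw phi (replicate (i + k) c) = phiw phi (replicate k c) \<circ> phiw phi (replicate i c)"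
  by (simp add: replicate_add)

context sys begin

lemma fp_exists: assumes "W \<noteq> []" shows "\<exists>z. y1 \<le> z \<and> z \<le> y0 \<and> phiw phi W z = z"
proof -
  let ?f = "\<lambda>z. z - phiw phi W z"
  have c: "continuous_on {y1..y0} ?f"
    by (intro continuous_intros phiw_cont) (use seg_I in auto)
  have a: "?f y1 \<le> 0" using phiw_box[of y1 W] y10 by auto
  have b: "0 \<le> ?f y0" using phiw_box[of y0 W] y10 by auto
  from IVT'[of ?f y1 0 y0, OF a b _ c] y10 obtain z where "y1 \<le> z" "z \<le> y0" "?f z = 0" by auto
  then show ?thesis by auto
qed

lemma fp_unique: "W \<noteq> [] \<Longrightarrow> z \<in> I \<Longrightarrow> z' \<in> I \<Longrightarrow> phiw phi W z = z \<Longrightarrow> phiw phi W z' = z' \<Longrightarrow> z = z'"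
  using phiw_contr[of z z' W] phiw_contr[of z' z W] by (cases z z' rule: linorder_cases) auto

lemma fixpt_props: assumes "W \<noteq> []"
  shows "fixpt I phi W \<in> I \<and> phiw phi W (fixpt I phi W) = fixpt I phi W \<and> y1 \<le> fixpt I phi W \<and> fixpt I phi W \<le> y0"
proof -
  obtain z where z: "y1 \<le> z" "z \<le> y0" "phiw phi W z = z" using fp_exists assms by blast
  have zI: "z \<in> I" using seg_I z by auto
  have "fixpt I phi W = z" unfolding fixpt_def
    using fp_unique[OF assms] zI z by (intro the_equality) auto
  then show ?thesis using z zI by auto
qed

lemma fixpt_I: "W \<noteq> [] \<Longrightarrow> fixpt I phi W \<in> I" using fixpt_props by blast
lemma fixpt_fix: "W \<noteq> [] \<Longrightarrow> phiw phi W (fixpt I phi W) = fixpt I phi W" using fixpt_props by blast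
lemma fixpt_ge: "W \<noteq> [] \<Longrightarrow> y1 \<le> fixpt I phi W" using fixpt_props by blast
lemma fixpt_le: "W \<noteq> [] \<Longrightarrow> fixpt I phi W \<le> y0" using fixpt_props by blast

lemma fixpt_eq: "W \<noteq> [] \<Longrightarrow> z \<in> I \<Longrightarrow> phiw phi W z = z \<Longrightarrow> fixpt I phi W = z"
  using fp_unique fixpt_props by blast

lemma fp_cmp_le: assumes "W \<noteq> []" "z \<in> I" shows "z \<le> phiw phi W z \<longleftrightarrow> z \<le> fixpt I phi W"
proof -
  let ?c = "fixpt I phi W"
  have cI: "?c \<in> I" and cf: "phiw phi W ?c = ?c" using fixpt_props assms by auto
  show ?thesis
  proof (cases z ?c rule: linorder_cases)
    case less
    then show ?thesis using phiw_contr[OF assms(2) cI less assms(1)] cf by auto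
  next
    case greater
    then show ?thesis using phiw_contr[OF cI assms(2) greater assms(1)] cf by auto
  qed (use cf in auto)
qed

lemma fp_cmp_lt: assumes "W \<noteq> []" "z \<in> I" shows "z < phiw phi W z \<longleftrightarrow> z < fixpt I phi W"
proof -
  let ?c = "fixpt I phi W"
  have cI: "?c \<in> I" and cf: "phiw phi W ?c = ?c" using fixpt_props assms by auto
  show ?thesis
  proof (cases z ?c rule: linorder_cases)
    case less
    then show ?thesis using phiw_contr[OF assms(2) cI less assms(1)] cf by auto
  next
    case greater
    then show ?thesis using phiw_contr[OF cI assms(2) greater assms(1)] cf by auto
  qed (use cf in auto)
qed

lemma phiw_y0_lt: "True \<in> set W \<Longrightarrow> phiw phi W y0 < y0"
proof (induction W)
  case Nil then show ?case by simp
next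
  case (Cons a W)
  show ?case
  proof (cases a)
    case True
    have "phi True y0 < y0" using phi1_lt[OF y0I y10] .
    then have "phiw phi W (phi True y0) < phiw phi W y0"
      using phiw_mono maps y0I by blast
    moreover have "phiw phi W y0 \<le> y0" using phiw_box[of y0 W] y10 by auto
    ultimately show ?thesis using True by simp
  next
    case False
    then show ?thesis using Cons fix0 by simp
  qed
qed

lemma phiw_y1_gt: "False \<in> set W \<Longrightarrow> y1 < phiw phi W y1"
proof (induction W)
  case Nil then show ?case by simp
next
  case (Cons a W)
  show ?case
  proof (cases a)
    case False
    have "y1 < phi False y1" using phi0_gt[OF y1I y10] .
    then have "phiw phi W y1 < phiw phi W (phi False y1)"
      using phiw_mono maps y1I by blast
    moreover have "y1 \<le> phiw phi W y1" using phiw_box[of y1 W] y10 by auto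
    ultimately show ?thesis using False by simp
  next
    case True
    then show ?thesis using Cons fix1 by simp
  qed
qed

lemma fixpt_lt_y0: assumes "True \<in> set W" shows "fixpt I phi W < y0"
proof -
  have W: "W \<noteq> []" using assms by auto
  have "fixpt I phi W \<noteq> y0" using phiw_y0_lt[OF assms] fixpt_fix[OF W] by auto
  then show ?thesis using fixpt_le[OF W] by auto
qed

lemma fixpt_gt_y1: assumes "False \<in> set W" shows "y1 < fixpt I phi W"
proof -
  have W: "W \<noteq> []" using assms by auto
  have "fixpt I phi W \<noteq> y1" using phiw_y1_gt[OF assms] fixpt_fix[OF W] by auto
  then show ?thesis using fixpt_ge[OF W] by auto
qed

lemma fixpt_rot: assumes "X @ Y \<noteq> []" shows "fixpt I phi (Y @ X) = phiw phi X (fixpt I phi (X @ Y))"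
proof -
  let ?c = "fixpt I phi (X @ Y)"
  have cI: "?c \<in> I" using fixpt_I assms by blast
  have cf: "phiw phi (X @ Y) ?c = ?c" using fixpt_fix assms by blast
  have "phiw phi (Y @ X) (phiw phi X ?c) = phiw phi X ?c" using cf by simp
  moreover have "Y @ X \<noteq> []" using assms by auto
  ultimately show ?thesis using fixpt_eq phiw_in cI by blast
qed

lemma rep0_mono: "y1 \<le> z \<Longrightarrow> z \<le> y0 \<Longrightarrow> i \<le> j \<Longrightarrow> phiw phi (replicate i False) z \<le> phiw phi (replicate j False) z"
proof -
  have step: "y1 \<le> t \<Longrightarrow> t \<le> y0 \<Longrightarrow> t \<le> phiw phi (replicate k False) t" for t k
  proof (induction k arbitrary: t)
    case (Suc k)
    have "t \<le> phi False t" using phi0_ge seg_I Suc.prems by auto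
    moreover have "phi False t \<le> phiw phi (replicate k False) (phi False t)"
      using Suc.IH phi_box Suc.prems by blast
    ultimately show ?case by simp
  qed simp
  assume h: "y1 \<le> z" "z \<le> y0" "i \<le> j"
  then obtain k where "j = i + k" using le_Suc_ex by blast
  then show ?thesis using step[of "phiw phi (replicate i False) z" k] phiw_box[OF h(1,2)]
    by (simp add: phiw_replicate_add)
qed

lemma rep1_mono: "y1 \<le> z \<Longrightarrow> z \<le> y0 \<Longrightarrow> i \<le> j \<Longrightarrow> phiw phi (replicate j True) z \<le> phiw phi (replicate i True) z"
proof -
  have step: "y1 \<le> t \<Longrightarrow> t \<le> y0 \<Longrightarrow> phiw phi (replicate k True) t \<le> t" for t k
  proof (induction k arbitrary: t)
    case (Suc k)
    have "phi True t \<le> t" using phi1_le seg_I Suc.prems by auto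
    moreover have "phiw phi (replicate k True) (phi True t) \<le> phi True t"
      using Suc.IH phi_box Suc.prems by blast
    ultimately show ?case by simp
  qed simp
  assume h: "y1 \<le> z" "z \<le> y0" "i \<le> j"
  then obtain k where "j = i + k" using le_Suc_ex by blast
  then show ?thesis using step[of "phiw phi (replicate i True) z" k] phiw_box[OF h(1,2)]
    by (simp add: phiw_replicate_add)
qed

lemma iter_conv: assumes W: "W \<noteq> []" and z: "z \<in> I"
  shows "(\<lambda>m. (phiw phi W ^^ m) z) \<longlonglongrightarrow> fixpt I phi W"
proof -
  let ?f = "phiw phi W" and ?c = "fixpt I phi W"
  define s where "s m = (?f ^^ m) z" for m
  have cI: "?c \<in> I" and cf: "?f ?c = ?c" using fixpt_props W by auto
  have sS: "s (Suc m) = ?f (s m)" for m by (simp add: s_def)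
  have key: "L \<in> I \<Longrightarrow> s \<longlonglongrightarrow> L \<Longrightarrow> (\<forall>m. s m \<in> I) \<Longrightarrow> L = ?c" for L
  proof -
    assume LI: "L \<in> I" and lim: "s \<longlonglongrightarrow> L" and sI: "\<forall>m. s m \<in> I"
    have "(\<lambda>m. ?f (s m)) \<longlonglongrightarrow> ?f L"
      using continuous_on_tendsto_compose[OF phiw_cont[OF order_refl] lim LI] sI by auto
    moreover have "(\<lambda>m. ?f (s m)) \<longlonglongrightarrow> L" using lim unfolding sS[symmetric]
      by (rule LIMSEQ_Suc)
    ultimately have "?f L = L" using LIMSEQ_unique by blast
    then show ?thesis using fixpt_eq[OF W LI] by simp
  qed
  show ?thesis
  proof (cases "z \<le> ?c")
    case True
    have bd: "z \<le> s m \<and> s m \<le> ?c" for m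
    proof (induction m)
      case 0 then show ?case using True by (simp add: s_def)
    next
      case (Suc m)
      have smI: "s m \<in> I" using inI[OF z cI] Suc by auto
      have "s m \<le> ?f (s m)" using fp_cmp_le[OF W smI] Suc by auto
      moreover have "?f (s m) \<le> ?c" using phiw_le[OF smI cI, of W] Suc cf by auto
      ultimately show ?case using Suc sS by auto
    qed
    have sI: "\<forall>m. s m \<in> I" using bd inI[OF z cI] by blast
    have inc: "incseq s"
    proof (rule incseq_SucI)
      fix m show "s m \<le> s (Suc m)" using fp_cmp_le[OF W] sI bd sS by auto
    qed
    obtain L where L: "s \<longlonglongrightarrow> L" "\<forall>i. s i \<le> L" using incseq_convergent[OF inc, of ?c] bd by blast
    have "L \<le> ?c" using LIMSEQ_le_const2[OF L(1)] bd by blast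
    moreover have "z \<le> L" using L(2) bd[of 0] by (metis order.trans)
    ultimately have "L \<in> I" using inI[OF z cI] by blast
    then show ?thesis using key L sI unfolding s_def by auto
  next
    case False
    have bd: "?c \<le> s m \<and> s m \<le> z" for m
    proof (induction m)
      case 0 then show ?case using False by (simp add: s_def)
    next
      case (Suc m)
      have smI: "s m \<in> I" using inI[OF cI z] Suc by auto
      have "?f (s m) \<le> s m" using fp_cmp_lt[OF W smI] Suc by auto
      moreover have "?c \<le> ?f (s m)" using phiw_le[OF cI smI, of W] Suc cf by auto
      ultimately show ?case using Suc sS by auto
    qed
    have sI: "\<forall>m. s m \<in> I" using bd inI[OF cI z] by blast
    have dec: "decseq s"
    proof (rule decseq_SucI)
      fix m show "s (Suc m) \<le> s m" using fp_cmp_lt[OF W] sI bd sS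
        by (metis linorder_not_less)
    qed
    obtain L where L: "s \<longlonglongrightarrow> L" "\<forall>i. L \<le> s i" using decseq_convergent[OF dec, of ?c] bd by blast
    have "?c \<le> L" using LIMSEQ_le_const[OF L(1)] bd by blast
    moreover have "L \<le> z" using L(2) bd[of 0] by (metis order.trans)
    ultimately have "L \<in> I" using inI[OF cI z] by blast
    then show ?thesis using key L sI unfolding s_def by auto
  qed
qed

end

definition good :: "(bool \<Rightarrow> real \<Rightarrow> real) \<Rightarrow> real \<Rightarrow> real \<Rightarrow> word \<Rightarrow> bool" where
  "good phi t s z \<longleftrightarrow> (\<forall>k<length z. (t \<le> phiw phi (take k z) s) = z ! k)"

definition upow :: "word \<Rightarrow> nat \<Rightarrow> word" where "upow u m = concat (replicate m u)"

lemma good_Nil[simp]: "good phi t s []" by (simp add: good_def)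

lemma good_Cons: "good phi t s (c # z) \<longleftrightarrow> (t \<le> s) = c \<and> good phi t (phi c s) z"
proof
  assume h: "good phi t s (c # z)"
  have "(t \<le> s) = c" using h[unfolded good_def, rule_format, of 0] by simp
  moreover have "good phi t (phi c s) z" unfolding good_def
  proof (intro allI impI)
    fix k assume "k < length z"
    then show "(t \<le> phiw phi (take k z) (phi c s)) = z ! k"
      using h[unfolded good_def, rule_format, of "Suc k"] by simp
  qed
  ultimately show "(t \<le> s) = c \<and> good phi t (phi c s) z" ..
next
  assume h: "(t \<le> s) = c \<and> good phi t (phi c s) z"
  show "good phi t s (c # z)" unfolding good_def
  proof (intro allI impI)
    fix k assume k: "k < length (c # z)"
    show "(t \<le> phiw phi (take k (c # z)) s) = (c # z) ! k"
    proof (cases k)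
      case 0 then show ?thesis using h by simp
    next
      case (Suc k') then show ?thesis using h k unfolding good_def by simp
    qed
  qed
qed

lemma good_append: "good phi t s (A @ B) \<longleftrightarrow> good phi t s A \<and> good phi t (phiw phi A s) B"
  by (induction A arbitrary: s) (auto simp: good_Cons)

lemma good_prefix: "good phi t s (A @ B) \<Longrightarrow> good phi t s A"
  using good_append by blast

lemma upow_0[simp]: "upow u 0 = []" by (simp add: upow_def)
lemma upow_Suc: "upow u (Suc m) = u @ upow u m" by (simp add: upow_def)
lemma upow_Suc2: "upow u (Suc m) = upow u m @ u"
  unfolding upow_def by (induction m) auto
lemma length_upow[simp]: "length (upow u m) = m * length u"
  by (induction m) (auto simp: upow_Suc)

lemma upow_nth: "k < m * length u \<Longrightarrow> upow u m ! k = u ! (k mod length u)"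
proof (induction m arbitrary: k)
  case 0 then show ?case by simp
next
  case (Suc m)
  show ?case
  proof (cases "k < length u")
    case True then show ?thesis by (simp add: upow_Suc nth_append)
  next
    case False
    then have "k - length u < m * length u" using Suc.prems by auto
    then have "upow u m ! (k - length u) = u ! ((k - length u) mod length u)" using Suc.IH by blast
    moreover have "(k - length u) mod length u = k mod length u"
      using False by (simp add: mod_if)
    ultimately show ?thesis using False by (simp add: upow_Suc nth_append)
  qed
qed

lemma phiw_upow: "phiw phi (upow u m) = (phiw phi u) ^^ m"
  by (induction m) (auto simp: upow_Suc2)


lemma thr_good_aux:
  assumes "(\<forall>k<length z. (x \<le> thr_orbit phi x k) = z ! k) \<or> good phi x x z"
  shows "k \<le> length z \<Longrightarrow> thr_orbit phi x k = phiw phi (take k z) x"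
proof (induction k)
  case 0 then show ?case by simp
next
  case (Suc k)
  then have k: "k < length z" by simp
  have IH: "thr_orbit phi x k = phiw phi (take k z) x" using Suc by simp
  have "(x \<le> thr_orbit phi x k) = z ! k"
    using assms k IH unfolding good_def by auto
  then show ?case using IH k by (simp add: take_Suc_conv_app_nth)
qed

lemma thr_good: "good phi x x z \<longleftrightarrow> (\<forall>k<length z. (x \<le> thr_orbit phi x k) = z ! k)"
proof
  assume h: "good phi x x z"
  show "\<forall>k<length z. (x \<le> thr_orbit phi x k) = z ! k"
    using thr_good_aux[of z x phi] h unfolding good_def by auto
next
  assume h: "\<forall>k<length z. (x \<le> thr_orbit phi x k) = z ! k"
  show "good phi x x z" unfolding good_def
    using thr_good_aux[of z x phi] h by auto
qed

definition morph :: "word \<Rightarrow> word \<Rightarrow> word \<Rightarrow> word" where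
  "morph B0 B1 w = concat (map (\<lambda>b. if b then B1 else B0) w)"

lemma morph_Nil[simp]: "morph B0 B1 [] = []" by (simp add: morph_def)
lemma morph_Cons[simp]: "morph B0 B1 (c # w) = (if c then B1 else B0) @ morph B0 B1 w"
  by (simp add: morph_def)
lemma morph_append[simp]: "morph B0 B1 (a @ b) = morph B0 B1 a @ morph B0 B1 b"
  by (simp add: morph_def)
lemma morph_upow: "morph B0 B1 (upow u m) = upow (morph B0 B1 u) m"
  by (induction m) (auto simp: upow_Suc)

lemma phiw_morph: "phiw (\<lambda>c. phiw phi (if c then B1 else B0)) w = phiw phi (morph B0 B1 w)"
  by (induction w) auto

context sys begin

abbreviation J where "J t \<equiv> {phi True t ..< phi False t}"

lemma J_box: "y1 \<le> t \<Longrightarrow> t \<le> y0 \<Longrightarrow> s \<in> J t \<Longrightarrow> y1 \<le> s \<and> s \<le> y0"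
  using phi_box[of t True] phi_box[of t False] by auto

lemma J_step: assumes t: "y1 \<le> t" "t \<le> y0" and s: "s \<in> J t \<or> s = t"
  shows "phi (t \<le> s) s \<in> J t"
proof (cases "s = t")
  case True then show ?thesis using phi_sep[OF t] by simp
next
  case False
  then have sJ: "s \<in> J t" using s by auto
  have sb: "y1 \<le> s" "s \<le> y0" using J_box[OF t sJ] by auto
  have tI: "t \<in> I" and sI: "s \<in> I" using seg_I t sb by auto
  have p0b: "y1 \<le> phi False t" "phi False t \<le> y0" using phi_box[OF t] by auto
  have p1b: "y1 \<le> phi True t" "phi True t \<le> y0" using phi_box[OF t] by auto
  show ?thesis
  proof (cases "t \<le> s")
    case True
    have a: "phi True t \<le> phi True s" using phiw_le[where W="[True]", OF tI sI True] by simp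
    have "phi True s < phi True (phi False t)" using phiw_mono[where W="[True]", OF sI maps[OF tI]] sJ by simp
    moreover have "phi True (phi False t) \<le> phi False t" using phi1_le[OF maps[OF tI]] p0b by auto
    ultimately show ?thesis using a True by auto
  next
    case False
    have a: "phi False s < phi False t" using phiw_mono[where W="[False]", OF sI tI] False by simp
    have "phi False (phi True t) \<le> phi False s" using phiw_le[where W="[False]", OF maps[OF tI] sI] sJ by simp
    moreover have "phi True t \<le> phi False (phi True t)" using phi0_ge[OF maps[OF tI]] p1b by auto
    ultimately show ?thesis using a False by auto
  qed
qed

lemma J_orbit: "y1 \<le> t \<Longrightarrow> t \<le> y0 \<Longrightarrow> good phi t s z \<Longrightarrow> s \<in> J t \<Longrightarrow> phiw phi z s \<in> J t"
proof (induction z arbitrary: s)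
  case (Cons c z)
  then have "(t \<le> s) = c" "good phi t (phi c s) z" using good_Cons by auto
  moreover have "phi (t \<le> s) s \<in> J t" using J_step Cons.prems by blast
  ultimately show ?case using Cons by auto
qed simp

lemma period_fwd:
  assumes u: "u \<noteq> []" and xI: "x \<in> I" and xa: "x \<le> fixpt I phi u"
    and C1: "\<forall>j<length u. u ! j \<longrightarrow> x \<le> phiw phi (take j u) x"
    and C0: "\<forall>j<length u. \<not> u ! j \<longrightarrow> phiw phi (take j u) (fixpt I phi u) < x \<or>
                (phiw phi (take j u) (fixpt I phi u) \<le> x \<and> x < fixpt I phi u)"
  shows "good phi x x (upow u m)"
proof -
  let ?a = "fixpt I phi u"
  have aI: "?a \<in> I" and af: "phiw phi u ?a = ?a" using fixpt_I fixpt_fix u by auto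
  have "\<forall>z. x \<le> z \<and> z \<le> ?a \<and> (z < ?a \<or> x = ?a) \<longrightarrow> good phi x z (upow u m)"
  proof (induction m)
    case 0 then show ?case by simp
  next
    case (Suc m)
    show ?case
    proof (intro allI impI)
      fix z assume z: "x \<le> z \<and> z \<le> ?a \<and> (z < ?a \<or> x = ?a)"
      have zI: "z \<in> I" using inI[OF xI aI] z by auto
      have g1: "good phi x z u" unfolding good_def
      proof (intro allI impI)
        fix j assume j: "j < length u"
        show "(x \<le> phiw phi (take j u) z) = u ! j"
        proof (cases "u ! j")
          case True
          then have "x \<le> phiw phi (take j u) x" using C1 j by auto
          also have "\<dots> \<le> phiw phi (take j u) z" using phiw_le[OF xI zI] z by auto
          finally show ?thesis using True by simp
        next
          case False
          have le: "phiw phi (take j u) z \<le> phiw phi (take j u) ?a" using phiw_le[OF zI aI] z by auto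
          have "phiw phi (take j u) z < x"
          proof (cases "phiw phi (take j u) ?a < x")
            case True then show ?thesis using le by auto
          next
            case False2: False
            then have h: "phiw phi (take j u) ?a \<le> x" "x < ?a" using C0 j False by auto
            then have "z < ?a" using z by auto
            then have "phiw phi (take j u) z < phiw phi (take j u) ?a" using phiw_mono[OF zI aI] by auto
            then show ?thesis using h by auto
          qed
          then show ?thesis using False by auto
        qed
      qed
      have z1: "x \<le> phiw phi u z"
        using fp_cmp_le[OF u xI] xa phiw_le[where W=u, OF xI zI] z by auto
      have z2: "phiw phi u z \<le> ?a" using phiw_le[where W=u, OF zI aI] z af by auto
      have z3: "phiw phi u z < ?a \<or> x = ?a"
        using z phiw_mono[where W=u, OF zI aI] af by auto
      have "good phi x (phiw phi u z) (upow u m)" using Suc z1 z2 z3 by blast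
      then show "good phi x z (upow u (Suc m))" using g1 by (simp add: upow_Suc good_append)
    qed
  qed
  then show ?thesis using xa by auto
qed

lemma period_conv_le:
  assumes u: "u \<noteq> []" and xI: "x \<in> I" and g: "\<forall>m. good phi x x (upow u m)" and u0: "u ! 0"
  shows "x \<le> fixpt I phi u"
proof -
  have "upow u 2 = u @ u" by (simp add: numeral_2_eq_2 upow_Suc)
  then have "good phi x x (u @ u)" using g by metis
  then have "good phi x (phiw phi u x) u" by (simp only: good_append)
  then have "(x \<le> phiw phi (take 0 u) (phiw phi u x)) = u ! 0" using u unfolding good_def by blast
  then have "(x \<le> phiw phi u x) = u ! 0" by simp
  then show ?thesis using fp_cmp_le[OF u xI] u0 by auto
qed

lemma period_conv0:
  assumes u: "u \<noteq> []" and xI: "x \<in> I" and g: "\<forall>m. good phi x x (upow u m)"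
    and j: "j < length u" "\<not> u ! j"
  shows "phiw phi (take j u) (fixpt I phi u) \<le> x"
proof -
  let ?a = "fixpt I phi u" and ?g = "phiw phi (take j u)"
  define s where "s m = (phiw phi u ^^ m) x" for m
  have aI: "?a \<in> I" using fixpt_I u by auto
  have sI: "s m \<in> I" for m unfolding s_def phiw_upow[symmetric] using phiw_in xI by blast
  have lim: "s \<longlonglongrightarrow> ?a" unfolding s_def using iter_conv[OF u xI] .
  have lt: "?g (s m) < x" for m
  proof -
    have "good phi x x (upow u m @ u)" using g upow_Suc2 by metis
    then have "good phi x (phiw phi (upow u m) x) u" by (simp only: good_append)
    then have "good phi x (s m) u" unfolding s_def phiw_upow .
    then have "(x \<le> ?g (s m)) = u ! j" using j unfolding good_def by blast
    then show ?thesis using j by auto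
  qed
  have "(\<lambda>m. ?g (s m)) \<longlonglongrightarrow> ?g ?a"
    using continuous_on_tendsto_compose[OF phiw_cont[OF order_refl] lim aI] sI by auto
  then show ?thesis using LIMSEQ_le_const2 lt less_imp_le by blast
qed

end

context sys begin

lemma fp_cmp_ge: assumes "W \<noteq> []" "z \<in> I" "fixpt I phi W \<le> z" shows "phiw phi W z \<le> z"
proof (cases "fixpt I phi W = z")
  case True then show ?thesis using fixpt_fix[OF assms(1)] by simp
next
  case False
  then have "\<not> z \<le> fixpt I phi W" using assms(3) by auto
  then show ?thesis using fp_cmp_le[OF assms(1,2)] by auto
qed

lemma psi_A2:
  assumes B0: "B0 \<noteq> []" and B1: "B1 \<noteq> []" and lt: "fixpt I phi B1 < fixpt I phi B0"
  shows "A2 I (\<lambda>c. phiw phi (if c then B1 else B0)) (fixpt I phi B0) (fixpt I phi B1)"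
  unfolding A2_def
proof (intro conjI)
  show "is_interval I" using intv .
  show "\<forall>k. (\<lambda>c. phiw phi (if c then B1 else B0)) k ` I \<subseteq> I" using phiw_in by auto
  show "\<forall>k. \<forall>x\<in>I. \<forall>y\<in>I. x < y \<longrightarrow> phiw phi (if k then B1 else B0) x < phiw phi (if k then B1 else B0) y \<and>
       phiw phi (if k then B1 else B0) y - phiw phi (if k then B1 else B0) x < y - x"
    using phiw_mono phiw_contr B0 B1 by auto
  show "fixpt I phi B0 \<in> I" "fixpt I phi B1 \<in> I" using fixpt_I B0 B1 by auto
  show "phiw phi (if False then B1 else B0) (fixpt I phi B0) = fixpt I phi B0" using fixpt_fix B0 by simp
  show "phiw phi (if True then B1 else B0) (fixpt I phi B1) = fixpt I phi B1" using fixpt_fix B1 by simp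
  show "fixpt I phi B1 < fixpt I phi B0" using lt .
qed

lemma rep_comm: "phiw phi (replicate p c) (phi c z) = phi c (phiw phi (replicate p c) z)"
proof -
  have "phiw phi (replicate p c) (phi c z) = phiw phi (replicate (Suc p) c) z" by simp
  also have "\<dots> = phiw phi (replicate p c @ [c]) z" by (simp only: replicate_append_same[symmetric] replicate_Suc)
  finally show ?thesis by simp
qed

lemma good_rep: "good phi t s (replicate n c) \<longleftrightarrow> (\<forall>i<n. (t \<le> phiw phi (replicate i c) s) = c)"
  unfolding good_def by (simp add: take_replicate)

lemma ltL: "fixpt I phi (replicate p False @ [True]) < fixpt I phi (replicate (Suc p) False @ [True])"
proof -
  let ?B1 = "replicate p False @ [True]" and ?B0 = "replicate (Suc p) False @ [True]"
  let ?c = "fixpt I phi ?B1"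
  have cI: "?c \<in> I" using fixpt_I by simp
  have "?c < y0" using fixpt_lt_y0 by simp
  then have "?c < phi False ?c" using phi0_gt cI by blast
  then have "phiw phi ?B1 ?c < phiw phi ?B1 (phi False ?c)" using phiw_mono cI maps by blast
  then have "?c < phiw phi ?B0 ?c" using fixpt_fix[of ?B1] by simp
  then show ?thesis using fp_cmp_lt[of ?B0 ?c] cI by simp
qed

lemma ltR: "fixpt I phi (False # replicate (Suc p) True) < fixpt I phi (False # replicate p True)"
proof -
  let ?B0 = "False # replicate p True" and ?B1 = "False # replicate (Suc p) True"
  let ?c = "fixpt I phi ?B0"
  have cI: "?c \<in> I" using fixpt_I by simp
  have "y1 < ?c" using fixpt_gt_y1 by simp
  then have "phi True ?c < ?c" using phi1_lt cI by blast
  moreover have "?B1 = ?B0 @ [True]" by (simp add: replicate_append_same)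
  ultimately have "phiw phi ?B1 ?c < ?c" using fixpt_fix[of ?B0] by simp
  then have "\<not> ?c \<le> fixpt I phi ?B1" using fp_cmp_le[of ?B1 ?c] cI by simp
  then show ?thesis by simp
qed

lemma winL:
  fixes p :: nat
  defines "B0 \<equiv> replicate (Suc p) False @ [True]" and "B1 \<equiv> replicate p False @ [True]"
  assumes p: "1 \<le> p"
    and x1: "fixpt I phi B1 \<le> x'" and x2: "x' \<le> fixpt I phi B0"
    and Q1: "phiw phi B1 x' \<le> Q" and Q2: "Q < phiw phi B0 x'"
  shows "good phi (phiw phi (replicate p False) x') Q (if x' \<le> Q then B1 else B0)"
proof -
  let ?x = "phiw phi (replicate p False) x'"
  let ?F = "\<lambda>i. replicate i False"
  have B0n: "B0 \<noteq> []" and B1n: "B1 \<noteq> []" unfolding B0_def B1_def by auto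
  have b1: "y1 \<le> fixpt I phi B1" "fixpt I phi B1 \<le> y0" using fixpt_ge fixpt_le B1n by auto
  have b0: "y1 \<le> fixpt I phi B0" "fixpt I phi B0 \<le> y0" using fixpt_ge fixpt_le B0n by auto
  have xb: "y1 \<le> x'" "x' \<le> y0" using x1 x2 b1 b0 by auto
  have x'I: "x' \<in> I" using seg_I xb by auto
  have Qb: "y1 \<le> Q" "Q \<le> y0" using Q1 Q2 phiw_box[OF xb, of B1] phiw_box[OF xb, of B0] by auto
  have QI: "Q \<in> I" using seg_I Qb by auto
  have xI: "?x \<in> I" using phiw_in x'I by blast
  show ?thesis
  proof (cases "x' \<le> Q")
    case True
    have last: "?x \<le> phiw phi (?F p) Q" using phiw_le[OF x'I QI True] .
    let ?Z = "False # True # ?F (p - 1)"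
    have pe: "?F p = False # ?F (p - 1)" using p by (cases p) auto
    have w1: "B0 @ ?F (p - 1) = ?F p @ ?Z" unfolding B0_def using pe
      by (metis append_Cons append_Nil append_assoc replicate_Suc replicate_append_same)
    have w2: "?F (p - 1) @ [False, True] = B1" unfolding B1_def using pe
      by (metis append_Cons append_Nil append_assoc replicate_append_same)
    have fZ: "fixpt I phi ?Z = phiw phi (?F (p - 1)) (fixpt I phi B1)"
      using fixpt_rot[of "?F (p - 1)" "[False, True]"] w2 by simp
    have "fixpt I phi B1 \<le> phi False x'" using x1 phi0_ge[OF x'I xb(2)] by auto
    then have "phiw phi (?F (p - 1)) (fixpt I phi B1) \<le> phiw phi (?F (p - 1)) (phi False x')"
      using phiw_le fixpt_I B1n maps x'I by blast
    also have "\<dots> = ?x" using pe by simp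
    finally have "fixpt I phi ?Z \<le> ?x" using fZ by simp
    then have zb: "phiw phi ?Z ?x \<le> ?x" using fp_cmp_ge xI by blast
    have "phiw phi (?F (p - 1)) Q < phiw phi (?F (p - 1)) (phiw phi B0 x')"
      using phiw_mono[OF QI phiw_in[OF x'I] Q2] .
    also have "\<dots> = phiw phi ?Z ?x" using w1 by (metis comp_apply phiw_append)
    finally have up: "phiw phi (?F (p - 1)) Q < ?x" using zb by auto
    have zeros: "\<forall>i<p. (?x \<le> phiw phi (?F i) Q) = False"
    proof (intro allI impI)
      fix i assume "i < p"
      then have "phiw phi (?F i) Q \<le> phiw phi (?F (p - 1)) Q" using rep0_mono[OF Qb] by auto
      then show "(?x \<le> phiw phi (?F i) Q) = False" using up by auto
    qed
    have "good phi ?x Q (?F p @ [True])"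
      unfolding good_append good_rep using zeros last by (simp add: good_Cons)
    then show ?thesis using True unfolding B1_def by simp
  next
    case False
    have lt: "phiw phi (?F p) Q < ?x" using phiw_mono[OF QI x'I] False by auto
    have zeros: "\<forall>i<Suc p. (?x \<le> phiw phi (?F i) Q) = False"
    proof (intro allI impI)
      fix i assume "i < Suc p"
      then have "phiw phi (?F i) Q \<le> phiw phi (?F p) Q" using rep0_mono[OF Qb] by auto
      then show "(?x \<le> phiw phi (?F i) Q) = False" using lt by auto
    qed
    let ?Z = "True # ?F (Suc p)"
    have fZ: "fixpt I phi ?Z = phiw phi (?F (Suc p)) (fixpt I phi B0)"
      using fixpt_rot[of "?F (Suc p)" "[True]"] unfolding B0_def by simp
    have f0I: "fixpt I phi B0 \<in> I" using fixpt_I B0n by blast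
    have "x' \<le> phi False (fixpt I phi B0)" using x2 phi0_ge[OF f0I b0(2)] by auto
    then have "?x \<le> phiw phi (?F p) (phi False (fixpt I phi B0))" using phiw_le x'I maps f0I by blast
    also have "\<dots> = fixpt I phi ?Z" using fZ by (simp add: rep_comm)
    finally have "?x \<le> phiw phi ?Z ?x" using fp_cmp_le[of ?Z ?x] xI by simp
    also have "phiw phi ?Z ?x = phiw phi (?F (Suc p)) (phiw phi B1 x')"
      unfolding B1_def by simp
    also have "\<dots> \<le> phiw phi (?F (Suc p)) Q" using phiw_le[OF phiw_in[OF x'I] QI Q1] .
    finally have last: "?x \<le> phiw phi (?F (Suc p)) Q" .
    have "good phi ?x Q (?F (Suc p) @ [True])"
      unfolding good_append good_rep using zeros last by (simp add: good_Cons)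
    then show ?thesis using False unfolding B0_def by simp
  qed
qed

lemma winR:
  fixes p :: nat
  defines "B0 \<equiv> False # replicate p True" and "B1 \<equiv> False # replicate (Suc p) True"
  assumes p: "1 \<le> p"
    and x1: "fixpt I phi B1 \<le> x'" and x2: "x' \<le> fixpt I phi B0"
    and Q1: "phiw phi B1 x' \<le> Q" and Q2: "Q < phiw phi B0 x'"
  shows "good phi (phiw phi B0 x') Q (if x' \<le> Q then B1 else B0)"
proof -
  let ?x = "phiw phi B0 x'"
  let ?T = "\<lambda>i. replicate i True"
  have B0n: "B0 \<noteq> []" and B1n: "B1 \<noteq> []" unfolding B0_def B1_def by auto
  have b1: "y1 \<le> fixpt I phi B1" "fixpt I phi B1 \<le> y0" using fixpt_ge fixpt_le B1n by auto
  have b0: "y1 \<le> fixpt I phi B0" "fixpt I phi B0 \<le> y0" using fixpt_ge fixpt_le B0n by auto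
  have xb: "y1 \<le> x'" "x' \<le> y0" using x1 x2 b1 b0 by auto
  have x'I: "x' \<in> I" using seg_I xb by auto
  have Qb: "y1 \<le> Q" "Q \<le> y0" using Q1 Q2 phiw_box[OF xb, of B1] phiw_box[OF xb, of B0] by auto
  have QI: "Q \<in> I" using seg_I Qb by auto
  have xI: "?x \<in> I" using phiw_in x'I by blast
  have pQb: "y1 \<le> phi False Q" "phi False Q \<le> y0" using phi_box[OF Qb] by auto
  have first: "(?x \<le> Q) = False" using Q2 by auto
  show ?thesis
  proof (cases "x' \<le> Q")
    case True
    have "?x \<le> phiw phi B0 Q" using phiw_le[OF x'I QI True] .
    then have lst: "?x \<le> phiw phi (?T p) (phi False Q)" unfolding B0_def by simp
    have ones: "\<forall>i<Suc p. (?x \<le> phiw phi (?T i) (phi False Q)) = True"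
    proof (intro allI impI)
      fix i assume "i < Suc p"
      then have "phiw phi (?T p) (phi False Q) \<le> phiw phi (?T i) (phi False Q)"
        using rep1_mono[OF pQb] by auto
      then show "(?x \<le> phiw phi (?T i) (phi False Q)) = True" using lst by auto
    qed
    have "good phi ?x Q (False # ?T (Suc p))"
      unfolding good_Cons good_rep using first ones by simp
    then show ?thesis using True unfolding B1_def by simp
  next
    case False
    let ?X = "False # ?T (p - 1)"
    obtain q where pq: "p = Suc q" using p by (cases p) auto
    have pe: "?T p = ?T (p - 1) @ [True]" unfolding pq by (simp add: replicate_append_same)
    have w: "?X @ [True] = B0" unfolding B0_def using pe by simp
    let ?Z = "True # ?X"
    have fZ: "fixpt I phi ?Z = phiw phi ?X (fixpt I phi B0)"
      using fixpt_rot[of ?X "[True]"] w by simp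
    have f0I: "fixpt I phi B0 \<in> I" using fixpt_I B0n by blast
    define d where "d = phiw phi ?X (fixpt I phi B0)"
    have dI: "d \<in> I" unfolding d_def using phiw_in f0I by blast
    have "phi True d = fixpt I phi B0" using fixpt_fix[OF B0n] unfolding w[symmetric] d_def
      by simp
    moreover have "y1 \<le> d" unfolding d_def using phiw_box b0 by blast
    ultimately have fd: "fixpt I phi B0 \<le> d" using phi1_le[OF dI] by auto
    have "?x \<le> fixpt I phi B0" using phiw_le[where W=B0, OF x'I f0I x2] fixpt_fix[OF B0n] by simp
    then have "?x \<le> fixpt I phi ?Z" using fd fZ d_def by simp
    then have "?x \<le> phiw phi ?Z ?x" using fp_cmp_le[of ?Z ?x] xI by simp
    also have "phiw phi ?Z ?x = phiw phi ?X (phiw phi B1 x')"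
      unfolding B1_def B0_def by (simp add: replicate_append_same[symmetric])
    also have "\<dots> \<le> phiw phi ?X Q" using phiw_le[OF phiw_in[OF x'I] QI Q1] .
    finally have lst: "?x \<le> phiw phi (?T (p - 1)) (phi False Q)" by simp
    have ones: "\<forall>i<p. (?x \<le> phiw phi (?T i) (phi False Q)) = True"
    proof (intro allI impI)
      fix i assume "i < p"
      then have "phiw phi (?T (p - 1)) (phi False Q) \<le> phiw phi (?T i) (phi False Q)"
        using rep1_mono[OF pQb] by auto
      then show "(?x \<le> phiw phi (?T i) (phi False Q)) = True" using lst by auto
    qed
    have "good phi ?x Q (False # ?T p)"
      unfolding good_Cons good_rep using first ones by simp
    then show ?thesis using False unfolding B0_def by simp
  qed
qed

end

lemma upow_TX: "upow (T @ X) (Suc m) = T @ upow (X @ T) m @ X"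
proof (induction m)
  case 0 then show ?case by (simp add: upow_Suc)
next
  case (Suc m)
  have "upow (T @ X) (Suc (Suc m)) = (T @ X) @ upow (T @ X) (Suc m)" by (simp only: upow_Suc)
  also have "\<dots> = T @ (X @ T) @ upow (X @ T) m @ X" using Suc by simp
  also have "\<dots> = T @ upow (X @ T) (Suc m) @ X" by (simp add: upow_Suc)
  finally show ?case .
qed

lemma fixpt_psi: "fixpt I (\<lambda>c. phiw phi (if c then B1 else B0)) z = fixpt I phi (morph B0 B1 z)"
  unfolding fixpt_def phiw_morph ..

context sys begin

lemma renorm:
  fixes T B0 B1 w w' X Y :: word
  defines "psi \<equiv> \<lambda>c. phiw phi (if c then B1 else B0)"
  assumes B1: "B1 = T @ [True]" and Tn: "T \<noteq> []" "hd T = False"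
    and B0: "B0 \<noteq> []" "hd B0 = False"
    and blk: "\<And>c. take (length T) ((if c then B1 else B0) @ [False]) = T \<and>
                  ((if c then B1 else B0) @ [False]) ! length T = c \<and>
                  length T < length ((if c then B1 else B0) @ [False])"
    and psiA2: "A2 I psi (fixpt I phi B0) (fixpt I phi B1)"
    and win: "\<And>x' Q. fixpt I phi B1 \<le> x' \<Longrightarrow> x' \<le> fixpt I phi B0 \<Longrightarrow> psi True x' \<le> Q \<Longrightarrow>
                 Q < psi False x' \<Longrightarrow> good phi (phiw phi T x') Q (if x' \<le> Q then B1 else B0)"
    and wu: "morph B0 B1 (True # False # w') = T @ X" "True # False # w = X @ T"
    and wb: "morph B0 B1 (False # True # w') = T @ Y" "False # True # w = Y @ T"
    and wt: "take (Suc (length T)) (True # False # w) = True # T"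
            "Suc (length T) < length (True # False # w)" "\<not> (True # False # w) ! Suc (length T)"
    and IH: "\<forall>x'\<in>I. (\<forall>m. good psi x' x' (upow (True # False # w') m)) \<longleftrightarrow>
               x' \<in> {fixpt I psi (False # True # w') .. fixpt I psi (True # False # w')}"
  shows "\<forall>x\<in>I. (\<forall>m. good phi x x (upow (True # False # w) m)) \<longleftrightarrow>
               x \<in> {fixpt I phi (False # True # w) .. fixpt I phi (True # False # w)}"
proof -
  interpret P: sys I psi "fixpt I phi B0" "fixpt I phi B1" using psiA2 by unfold_locales
  let ?u = "True # False # w" and ?u' = "True # False # w'"
  let ?a' = "fixpt I psi ?u'" and ?b' = "fixpt I psi (False # True # w')"
  let ?a = "fixpt I phi ?u" and ?b = "fixpt I phi (False # True # w)"
  have B1n: "B1 \<noteq> []" using B1 by simp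
  have psi_eq: "phiw psi z = phiw phi (morph B0 B1 z)" for z
    unfolding psi_def by (rule phiw_morph)
  have fpsi: "fixpt I psi z = fixpt I phi (morph B0 B1 z)" for z
    unfolding psi_def by (rule fixpt_psi)
  have a'_eq: "?a' = fixpt I phi (T @ X)" using fpsi wu(1) by simp
  have b'_eq: "?b' = fixpt I phi (T @ Y)" using fpsi wb(1) by simp
  have TXn: "T @ X \<noteq> []" "T @ Y \<noteq> []" using Tn by auto
  have a_eq: "?a = phiw phi T ?a'" using fixpt_rot[OF TXn(1)] wu(2) a'_eq by simp
  have b_eq: "?b = phiw phi T ?b'" using fixpt_rot[OF TXn(2)] wb(2) b'_eq by simp
  have a'I: "?a' \<in> I" and b'I: "?b' \<in> I" using P.fixpt_I by auto
  have a'b: "fixpt I phi B1 \<le> ?a'" "?a' \<le> fixpt I phi B0" using P.fixpt_ge P.fixpt_le by auto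
  have b'b: "fixpt I phi B1 \<le> ?b'" "?b' \<le> fixpt I phi B0" using P.fixpt_ge P.fixpt_le by auto
  have y1b: "y1 \<le> fixpt I phi B1" using fixpt_ge B1n by blast
  have y0b: "fixpt I phi B0 \<le> y0" using fixpt_le B0 by blast
  have psiT: "psi True z = phi True (phiw phi T z)" for z unfolding psi_def B1 by simp
  have bfwd: "\<And>v Q. fixpt I phi B1 \<le> x' \<Longrightarrow> x' \<le> fixpt I phi B0 \<Longrightarrow> good psi x' Q v \<Longrightarrow>
      Q \<in> P.J x' \<Longrightarrow> good phi (phiw phi T x') Q (morph B0 B1 v)" for x'
  proof -
    fix v Q
    assume x1: "fixpt I phi B1 \<le> x'" and x2: "x' \<le> fixpt I phi B0"
    show "good psi x' Q v \<Longrightarrow> Q \<in> P.J x' \<Longrightarrow> good phi (phiw phi T x') Q (morph B0 B1 v)"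
    proof (induction v arbitrary: Q)
      case Nil then show ?case by simp
    next
      case (Cons c v)
      have c: "(x' \<le> Q) = c" and g: "good psi x' (psi c Q) v" using Cons.prems(1) good_Cons by auto
      have gb0: "good phi (phiw phi T x') Q (if x' \<le> Q then B1 else B0)"
        using win[OF x1 x2, of Q] Cons.prems(2) by simp
      then have gb: "good phi (phiw phi T x') Q (if c then B1 else B0)" using c by simp
      have "psi (x' \<le> Q) Q \<in> P.J x'" using P.J_step[OF x1 x2] Cons.prems(2) by blast
      then have "good phi (phiw phi T x') (psi c Q) (morph B0 B1 v)" using Cons.IH g c by auto
      then show ?case using gb unfolding psi_def by (simp add: good_append)
    qed
  qed
  have bconv: "\<And>v Q. x' \<in> I \<Longrightarrow> Q \<in> I \<Longrightarrow> good phi (phiw phi T x') Q (morph B0 B1 v @ [False]) \<Longrightarrow>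
      good psi x' Q v" for x'
  proof -
    fix v Q
    assume x'I: "x' \<in> I"
    show "Q \<in> I \<Longrightarrow> good phi (phiw phi T x') Q (morph B0 B1 v @ [False]) \<Longrightarrow> good psi x' Q v"
    proof (induction v arbitrary: Q)
      case Nil then show ?case by simp
    next
      case (Cons c v)
      let ?B = "if c then B1 else B0"
      obtain r where r: "morph B0 B1 v @ [False] = False # r"
      proof (cases v)
        case Nil then show ?thesis using that by simp
      next
        case (Cons c' v')
        have "hd (if c' then B1 else B0) = False" using B1 Tn B0 by (cases c') auto
        moreover have "(if c' then B1 else B0) \<noteq> []" using B1n B0 by auto
        ultimately show ?thesis using that Cons by (cases "if c' then B1 else B0") auto
      qed
      have g: "good phi (phiw phi T x') Q (?B @ (morph B0 B1 v @ [False]))"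
        using Cons.prems(2) by simp
      then have "good phi (phiw phi T x') Q ((?B @ [False]) @ r)" using r by simp
      then have g1: "good phi (phiw phi T x') Q (?B @ [False])" using good_prefix by blast
      have "(phiw phi T x' \<le> phiw phi (take (length T) (?B @ [False])) Q) = (?B @ [False]) ! length T"
        using g1 blk[of c] unfolding good_def by blast
      moreover have tk: "take (length T) (?B @ [False]) = T" using blk[of c] by blast
      moreover have nt: "(?B @ [False]) ! length T = c" using blk[of c] by blast
      ultimately have "(phiw phi T x' \<le> phiw phi T Q) = c" by (simp only: tk nt)
      then have c: "(x' \<le> Q) = c" using phiw_le_iff[OF x'I Cons.prems(1)] by simp
      have "good phi (phiw phi T x') (phiw phi ?B Q) (morph B0 B1 v @ [False])"
        using g good_append by blast
      moreover have "phiw phi ?B Q \<in> I" using phiw_in Cons.prems(1) by blast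
      ultimately have "good psi x' (psi c Q) v" using Cons.IH unfolding psi_def by auto
      then show ?case using c good_Cons by blast
    qed
  qed
  have word: "True # morph B0 B1 (False # w' @ upow ?u' m) = upow ?u m @ X" for m
  proof -
    have "T @ (True # morph B0 B1 (False # w' @ upow ?u' m)) = morph B0 B1 (upow ?u' (Suc m))"
      using B1 by (simp add: upow_Suc)
    also have "\<dots> = upow (T @ X) (Suc m)" using morph_upow wu(1) by metis
    also have "\<dots> = T @ upow ?u m @ X" using upow_TX wu(2) by metis
    finally show ?thesis by simp
  qed
  show ?thesis
  proof (intro ballI iffI)
    fix x assume xI: "x \<in> I" and H: "x \<in> {?b .. ?a}"
    have "?b \<le> ?a" using H by auto
    then have ba': "?b' \<le> ?a'" using phiw_le_iff[OF b'I a'I] a_eq b_eq by simp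
    have "{?b'..?a'} \<subseteq> I" using inI[OF b'I a'I] by auto
    then have "continuous_on {?b'..?a'} (phiw phi T)" by (rule phiw_cont)
    then obtain x' where x': "?b' \<le> x'" "x' \<le> ?a'" "phiw phi T x' = x"
      using IVT'[of "phiw phi T" ?b' x ?a'] H a_eq b_eq ba' by auto
    have x'I: "x' \<in> I" using inI[OF b'I a'I] x' by auto
    have G: "\<forall>m. good psi x' x' (upow ?u' m)" using IH x'I x' by auto
    have x1: "fixpt I phi B1 \<le> x'" and x2: "x' \<le> fixpt I phi B0" using x' a'b b'b by auto
    show "\<forall>m. good phi x x (upow ?u m)"
    proof
      fix m
      have "good psi x' x' (True # (False # w' @ upow ?u' m))" using G[rule_format, of "Suc m"]
        by (simp add: upow_Suc)
      then have g: "good psi x' (psi True x') (False # w' @ upow ?u' m)" using good_Cons by auto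
      have "psi (x' \<le> x') x' \<in> P.J x'" using P.J_step[OF x1 x2] by blast
      then have "good phi x (psi True x') (morph B0 B1 (False # w' @ upow ?u' m))"
        using bfwd[OF x1 x2 g] x'(3) by simp
      then have "good phi x x (True # morph B0 B1 (False # w' @ upow ?u' m))"
        using psiT x'(3) good_Cons by simp
      then have "good phi x x (upow ?u m @ X)" using word by metis
      then show "good phi x x (upow ?u m)" using good_prefix by blast
    qed
  next
    fix x assume xI: "x \<in> I" and G: "\<forall>m. good phi x x (upow ?u m)"
    have un: "?u \<noteq> []" by simp
    have xa: "x \<le> ?a" using period_conv_le[OF un xI G] by simp
    have gu: "good phi x x ?u" using G[rule_format, of 1] by (simp add: upow_Suc)
    have "(x \<le> phiw phi (take 1 ?u) x) = ?u ! 1" using gu unfolding good_def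
      by (metis Suc_less_eq length_Cons zero_less_Suc One_nat_def)
    then have "phi True x < x" by simp
    then have xy1: "y1 \<le> x" using phi1_ge[OF xI] by force
    have "(x \<le> phiw phi (take (Suc (length T)) ?u) x) = ?u ! Suc (length T)"
      using gu wt(2) unfolding good_def by blast
    then have lt: "phiw phi T (phi True x) < x" using wt(1,3) by simp
    have "y1 \<le> phi True x" using phiw_le[where W="[True]", OF y1I xI xy1] fix1 by simp
    then have "phiw phi T y1 \<le> phiw phi T (phi True x)" using phiw_le y1I maps xI by blast
    then have l1: "phiw phi T y1 \<le> x" using lt by simp
    have y1a': "y1 \<le> ?a'" using y1b a'b by simp
    have "{y1..?a'} \<subseteq> I" using inI[OF y1I a'I] by auto
    then have "continuous_on {y1..?a'} (phiw phi T)" by (rule phiw_cont)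
    then obtain x' where x': "y1 \<le> x'" "x' \<le> ?a'" "phiw phi T x' = x"
      using IVT'[of "phiw phi T" y1 x ?a'] l1 xa a_eq y1a' by auto
    have x'I: "x' \<in> I" using inI[OF y1I a'I] x' by auto
    have "\<forall>m. good psi x' x' (upow ?u' m)"
    proof
      fix m show "good psi x' x' (upow ?u' m)"
      proof (cases m)
        case 0 then show ?thesis by simp
      next
        case (Suc k)
        let ?r = "False # w' @ upow ?u' k"
        have "upow ?u (Suc k) = (upow ?u k @ X) @ T" using wu(2) by (simp add: upow_Suc2)
        also have "\<dots> = (True # morph B0 B1 ?r) @ T" using word by metis
        also have "\<dots> = (True # morph B0 B1 ?r @ [False]) @ tl T" using Tn by (cases T) auto
        finally have "good phi x x ((True # morph B0 B1 ?r @ [False]) @ tl T)" using G by metis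
        then have "good phi x x (True # morph B0 B1 ?r @ [False])" using good_prefix by blast
        then have "good phi x (phi True x) (morph B0 B1 ?r @ [False])" using good_Cons by auto
        then have "good psi x' (psi True x') ?r" using bconv[OF x'I] psiT x'(3) maps xI by auto
        then have "good psi x' x' (True # ?r)" using good_Cons by auto
        then show ?thesis using Suc by (simp add: upow_Suc)
      qed
    qed
    then have "x' \<in> {?b' .. ?a'}" using IH x'I by blast
    then show "x \<in> {?b .. ?a}" using phiw_le[OF b'I x'I] phiw_le[OF x'I a'I] a_eq b_eq x'(3) by auto
  qed
qed

end

context sys begin

lemma base0:
  assumes q: "1 \<le> q" and w: "w = replicate (q - 1) False"
  shows "\<forall>x\<in>I. (\<forall>m. good phi x x (upow (True # False # w) m)) \<longleftrightarrow>
               x \<in> {fixpt I phi (False # True # w) .. fixpt I phi (True # False # w)}"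
proof -
  let ?u = "True # False # w"
  let ?a = "fixpt I phi ?u" and ?b = "fixpt I phi (False # True # w)"
  let ?X = "True # w"
  have un: "?u \<noteq> []" by simp
  have uX: "?u = ?X @ [False]" using w by (simp add: replicate_append_same)
  have aI: "?a \<in> I" using fixpt_I un by blast
  have af: "phiw phi ?u ?a = ?a" using fixpt_fix un by blast
  have b_eq: "?b = phiw phi ?X ?a" using fixpt_rot[of ?X "[False]"] uX by simp
  have ab: "phi False ?b = ?a" using af b_eq uX by (metis comp_apply phiw_snoc)
  have bI: "?b \<in> I" using fixpt_I by simp
  have "?b < y0" using fixpt_lt_y0 by simp
  then have ba: "?b < ?a" using phi0_gt[OF bI] ab by simp
  have a1: "y1 \<le> phi True ?a" "phi True ?a \<le> y0"
    using phi_box fixpt_ge[OF un] fixpt_le[OF un] by blast+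
  have wF: "False # w = replicate q False" using w q by (cases q) auto
  have uj: "j < length ?u \<Longrightarrow> 1 \<le> j \<Longrightarrow> take j ?u = True # replicate (j - 1) False \<and> \<not> ?u ! j" for j
    unfolding wF by (cases j) (auto simp: take_replicate min_def)
  have lenu: "length ?u = Suc q" using w q by simp
  show ?thesis
  proof (intro ballI iffI)
    fix x assume xI: "x \<in> I" and H: "x \<in> {?b .. ?a}"
    show "\<forall>m. good phi x x (upow ?u m)"
    proof
      fix m show "good phi x x (upow ?u m)"
      proof (rule period_fwd[OF un xI])
        show "x \<le> ?a" using H by auto
        show "\<forall>j<length ?u. ?u ! j \<longrightarrow> x \<le> phiw phi (take j ?u) x"
        proof (intro allI impI)
          fix j assume "j < length ?u" "?u ! j"
          then have "j = 0" using uj[of j] by (cases "j = 0") auto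
          then show "x \<le> phiw phi (take j ?u) x" by simp
        qed
        show "\<forall>j<length ?u. \<not> ?u ! j \<longrightarrow> phiw phi (take j ?u) ?a < x \<or>
                (phiw phi (take j ?u) ?a \<le> x \<and> x < ?a)"
        proof (intro allI impI)
          fix j assume j: "j < length ?u" "\<not> ?u ! j"
          then have j1: "1 \<le> j" by (cases j) auto
          have "phiw phi (take j ?u) ?a = phiw phi (replicate (j - 1) False) (phi True ?a)"
            using uj[OF j(1) j1] by simp
          also have "\<dots> \<le> phiw phi (replicate (q - 1) False) (phi True ?a)"
            using rep0_mono[OF a1] j lenu by auto
          also have "\<dots> = ?b" using b_eq w by simp
          finally have "phiw phi (take j ?u) ?a \<le> ?b" .
          then show "phiw phi (take j ?u) ?a < x \<or> (phiw phi (take j ?u) ?a \<le> x \<and> x < ?a)"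
            using H ba by force
        qed
      qed
    qed
  next
    fix x assume xI: "x \<in> I" and G: "\<forall>m. good phi x x (upow ?u m)"
    have "x \<le> ?a" using period_conv_le[OF un xI G] by simp
    moreover have "phiw phi (take q ?u) ?a \<le> x"
      using period_conv0[OF un xI G, of q] uj[of q] lenu q by simp
    moreover have "phiw phi (take q ?u) ?a = ?b" using uj[of q] lenu q b_eq w by simp
    ultimately show "x \<in> {?b .. ?a}" by simp
  qed
qed

lemma base1:
  assumes q: "1 \<le> q" and w: "w = replicate (q - 1) True"
  shows "\<forall>x\<in>I. (\<forall>m. good phi x x (upow (True # False # w) m)) \<longleftrightarrow>
               x \<in> {fixpt I phi (False # True # w) .. fixpt I phi (True # False # w)}"
proof -
  let ?u = "True # False # w"
  let ?a = "fixpt I phi ?u" and ?b = "fixpt I phi (False # True # w)"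
  have un: "?u \<noteq> []" by simp
  have uY: "False # True # w = (False # w) @ [True]" using w by (simp add: replicate_append_same)
  have aI: "?a \<in> I" using fixpt_I un by blast
  have b_eq: "?b = phi True ?a" using fixpt_rot[of "[True]" "False # w"] uY by simp
  have "y1 < ?a" using fixpt_gt_y1 by simp
  then have ba: "?b < ?a" using phi1_lt[OF aI] b_eq by simp
  have lenu: "length ?u = Suc q" using w q by simp
  show ?thesis
  proof (intro ballI iffI)
    fix x assume xI: "x \<in> I" and H: "x \<in> {?b .. ?a}"
    have xb: "y1 \<le> x" "x \<le> y0" using H fixpt_ge[OF un] fixpt_le[OF un] fixpt_ge[of "False # True # w"] by auto
    have pb: "y1 \<le> phi False (phi True x)" "phi False (phi True x) \<le> y0"
      using phi_box[OF phi_box[OF xb, of True, THEN conjunct1] phi_box[OF xb, of True, THEN conjunct2], of False] by auto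
    have xa: "x \<le> phiw phi ?u x" using fp_cmp_le[OF un xI] H by simp
    show "\<forall>m. good phi x x (upow ?u m)"
    proof
      fix m show "good phi x x (upow ?u m)"
      proof (rule period_fwd[OF un xI])
        show "x \<le> ?a" using H by auto
        show "\<forall>j<length ?u. ?u ! j \<longrightarrow> x \<le> phiw phi (take j ?u) x"
        proof (intro allI impI)
          fix j assume j: "j < length ?u" "?u ! j"
          show "x \<le> phiw phi (take j ?u) x"
          proof (cases j)
            case 0 then show ?thesis by simp
          next
            case (Suc i)
            then obtain k where k: "j = Suc (Suc k)" using j by (cases i) auto
            then have "take j ?u = True # False # replicate k True" using w j by (simp add: take_replicate min_def)
            then have "phiw phi (take j ?u) x = phiw phi (replicate k True) (phi False (phi True x))" by simp
            moreover have "phiw phi (replicate (q - 1) True) (phi False (phi True x)) \<le>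
                           phiw phi (replicate k True) (phi False (phi True x))"
              using rep1_mono[OF pb] k j lenu by auto
            moreover have "phiw phi ?u x = phiw phi (replicate (q - 1) True) (phi False (phi True x))" using w by simp
            ultimately show ?thesis using xa by simp
          qed
        qed
        show "\<forall>j<length ?u. \<not> ?u ! j \<longrightarrow> phiw phi (take j ?u) ?a < x \<or>
                (phiw phi (take j ?u) ?a \<le> x \<and> x < ?a)"
        proof (intro allI impI)
          fix j assume j: "j < length ?u" "\<not> ?u ! j"
          then have "j = 1" using w by (cases j; cases "j - 1") auto
          then have "phiw phi (take j ?u) ?a = ?b" using b_eq by simp
          then show "phiw phi (take j ?u) ?a < x \<or> (phiw phi (take j ?u) ?a \<le> x \<and> x < ?a)"
            using H ba by force
        qed
      qed
    qed
  next
    fix x assume xI: "x \<in> I" and G: "\<forall>m. good phi x x (upow ?u m)"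
    have "x \<le> ?a" using period_conv_le[OF un xI G] by simp
    moreover have "phiw phi (take 1 ?u) ?a \<le> x" using period_conv0[OF un xI G, of 1] by simp
    ultimately show "x \<in> {?b .. ?a}" using b_eq by simp
  qed
qed

end

lemma Lmor_morph: "Lmor p = morph (replicate (Suc p) False @ [True]) (replicate p False @ [True])"
  unfolding Lmor_def morph_def by (simp only: Suc_eq_plus1)

lemma Rmor_morph: "Rmor p = morph (False # replicate p True) (False # replicate (Suc p) True)"
  unfolding Rmor_def morph_def by (simp only: Suc_eq_plus1)

lemma take_rep_Cons: "take p (c # replicate p c @ r) = replicate p c"
  by (induction p) auto

lemma nth_rep_Cons: "(c # replicate p c @ r) ! p = c"
  by (induction p) auto

lemma snoc_rep: "(w @ [c] = replicate (Suc k) c) = (w = replicate k c)"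
  by (metis append1_eq_conv replicate_append_same replicate_Suc)

lemma rep_Suc_snoc: "replicate (Suc k) c = replicate k c @ [c]"
  by (simp add: replicate_append_same)

lemma morph_form:
  assumes B: "\<And>c. \<exists>bb. (if c then B1 else B0) = False # bb @ [True]"
  shows "W \<noteq> [] \<Longrightarrow> \<exists>w. morph B0 B1 W = False # w @ [True]"
proof (induction W)
  case Nil then show ?case by simp
next
  case (Cons c W)
  obtain bb where bb: "(if c then B1 else B0) = False # bb @ [True]" using B by blast
  show ?case
  proof (cases "W = []")
    case True then show ?thesis using bb by simp
  next
    case False
    then obtain w where "morph B0 B1 W = False # w @ [True]" using Cons.IH by blast
    then show ?thesis using bb by (intro exI[of _ "bb @ [True] @ False # w"]) simp
  qed
qed

lemma valid_form: "valid W \<Longrightarrow> W = [False] \<or> W = [True] \<or> (\<exists>w. W = False # w @ [True])"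
proof (induction rule: valid.induct)
  case (validL w p)
  have wn: "w \<noteq> []" using validL.IH by auto
  have "\<exists>bb. (if c then replicate p False @ [True] else replicate (Suc p) False @ [True]) = False # bb @ [True]" for c
    using validL.hyps(2) by (cases c; cases p) auto
  then show ?case using morph_form[OF _ wn] unfolding Lmor_morph by blast
next
  case (validR w p)
  have wn: "w \<noteq> []" using validR.IH by auto
  have "\<exists>bb. (if c then False # replicate (Suc p) True else False # replicate p True) = False # bb @ [True]" for c
    using validR.hyps(2) by (cases c; cases p) (auto simp: replicate_append_same[symmetric])
  then show ?case using morph_form[OF _ wn] unfolding Rmor_morph by blast
qed auto

lemma morph_hdF:
  assumes "\<And>c. \<exists>bb. (if c then B1 else B0) = False # bb"
  shows "v \<noteq> [] \<Longrightarrow> \<exists>r. morph B0 B1 v = False # r"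
proof -
  assume "v \<noteq> []"
  then obtain c v' where v: "v = c # v'" by (cases v) auto
  obtain bb where "(if c then B1 else B0) = False # bb" using assms by blast
  then show ?thesis using v by auto
qed

definition Core :: "word \<Rightarrow> bool" where
  "Core w \<longleftrightarrow> (\<forall>I phi y0 y1. A2 I phi y0 y1 \<longrightarrow>
     (\<forall>x\<in>I. (\<forall>m. good phi x x (upow (True # False # w) m)) \<longleftrightarrow>
               x \<in> {fixpt I phi (False # True # w) .. fixpt I phi (True # False # w)}))"

lemma core_L:
  assumes p: "1 \<le> p" and IH: "Core w'"
  shows "Core (replicate p False @ [True] @ Lmor p w' @ replicate p False)"
  unfolding Core_def
proof (intro allI impI)
  fix I phi y0 y1 assume A: "A2 I phi y0 y1"
  interpret sys I phi y0 y1 using A by unfold_locales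
  let ?T = "replicate p False"
  let ?B0 = "replicate (Suc p) False @ [True]" and ?B1 = "replicate p False @ [True]"
  let ?M = "Lmor p w'"
  let ?w = "?T @ [True] @ ?M @ ?T"
  let ?X = "True # replicate (Suc p) False @ [True] @ ?M"
  let ?Y = "False # True # replicate p False @ [True] @ ?M"
  let ?psi = "\<lambda>c. phiw phi (if c then ?B1 else ?B0)"
  have LM: "Lmor p = morph ?B0 ?B1" by (rule Lmor_morph)
  have Tn: "?T \<noteq> []" "hd ?T = False" using p by (cases p; simp)+
  have psiA2: "A2 I ?psi (fixpt I phi ?B0) (fixpt I phi ?B1)"
    using psi_A2[of ?B0 ?B1] ltL by simp
  show "\<forall>x\<in>I. (\<forall>m. good phi x x (upow (True # False # ?w) m)) \<longleftrightarrow>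
               x \<in> {fixpt I phi (False # True # ?w) .. fixpt I phi (True # False # ?w)}"
  proof (rule renorm[of ?B1 ?T ?B0 w' ?X ?w ?Y])
    show "?B1 = ?T @ [True]" by simp
    show "?T \<noteq> []" "hd ?T = False" using Tn by auto
    show "?B0 \<noteq> []" "hd ?B0 = False" by auto
    show "take (length ?T) ((if c then ?B1 else ?B0) @ [False]) = ?T \<and>
          ((if c then ?B1 else ?B0) @ [False]) ! length ?T = c \<and>
          length ?T < length ((if c then ?B1 else ?B0) @ [False])" for c
      by (cases c) (auto simp: nth_append rep_Suc_snoc simp del: replicate.simps)
    show "A2 I ?psi (fixpt I phi ?B0) (fixpt I phi ?B1)" using psiA2 .
    show "good phi (phiw phi ?T x') Q (if x' \<le> Q then ?B1 else ?B0)"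
      if "fixpt I phi ?B1 \<le> x'" "x' \<le> fixpt I phi ?B0" "?psi True x' \<le> Q" "Q < ?psi False x'" for x' Q
      using winL[OF p] that by simp
    show "morph ?B0 ?B1 (True # False # w') = ?T @ ?X" using LM by simp
    show "True # False # ?w = ?X @ ?T" by simp
    show "morph ?B0 ?B1 (False # True # w') = ?T @ ?Y" using LM by (simp add: replicate_append_same[symmetric])
    show "False # True # ?w = ?Y @ ?T" by simp
    show "take (Suc (length ?T)) (True # False # ?w) = True # ?T"
      using take_rep_Cons[of p False] by simp
    show "Suc (length ?T) < length (True # False # ?w)" by simp
    show "\<not> (True # False # ?w) ! Suc (length ?T)"
      using nth_rep_Cons[of False p] by simp
    show "\<forall>x'\<in>I. (\<forall>m. good ?psi x' x' (upow (True # False # w') m)) \<longleftrightarrow>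
               x' \<in> {fixpt I ?psi (False # True # w') .. fixpt I ?psi (True # False # w')}"
      using IH psiA2 unfolding Core_def by blast
  qed
qed

lemma core_R:
  assumes p: "1 \<le> p" and IH: "Core w'"
  shows "Core (replicate p True @ Rmor p w' @ False # replicate p True)"
  unfolding Core_def
proof (intro allI impI)
  fix I phi y0 y1 assume A: "A2 I phi y0 y1"
  interpret sys I phi y0 y1 using A by unfold_locales
  let ?B0 = "False # replicate p True" and ?B1 = "False # replicate (Suc p) True"
  let ?T = ?B0
  let ?M = "Rmor p w'"
  let ?w = "replicate p True @ ?M @ False # replicate p True"
  let ?X = "True # False # replicate p True @ ?M"
  let ?Y = "False # True # replicate p True @ ?M"
  let ?psi = "\<lambda>c. phiw phi (if c then ?B1 else ?B0)"
  have RM: "Rmor p = morph ?B0 ?B1" by (rule Rmor_morph)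
  have psiA2: "A2 I ?psi (fixpt I phi ?B0) (fixpt I phi ?B1)"
    using psi_A2[of ?B0 ?B1] ltR by simp
  have hdM: "?M = [] \<or> hd ?M = False"
  proof (cases "w' = []")
    case False
    have "\<exists>bb. (if c then ?B1 else ?B0) = False # bb" for c by auto
    then obtain r where "morph ?B0 ?B1 w' = False # r" using morph_hdF False by blast
    then show ?thesis using RM by simp
  qed (simp add: Rmor_def)
  show "\<forall>x\<in>I. (\<forall>m. good phi x x (upow (True # False # ?w) m)) \<longleftrightarrow>
               x \<in> {fixpt I phi (False # True # ?w) .. fixpt I phi (True # False # ?w)}"
  proof (rule renorm[of ?B1 ?T ?B0 w' ?X ?w ?Y])
    show "?B1 = ?T @ [True]" by (simp add: replicate_append_same)
    show "?T \<noteq> []" "hd ?T = False" by auto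
    show "?B0 \<noteq> []" "hd ?B0 = False" by auto
    show "take (length ?T) ((if c then ?B1 else ?B0) @ [False]) = ?T \<and>
          ((if c then ?B1 else ?B0) @ [False]) ! length ?T = c \<and>
          length ?T < length ((if c then ?B1 else ?B0) @ [False])" for c
      by (cases c) (auto simp: nth_append replicate_append_same[symmetric] simp del: replicate.simps)
    show "A2 I ?psi (fixpt I phi ?B0) (fixpt I phi ?B1)" using psiA2 .
    show "good phi (phiw phi ?T x') Q (if x' \<le> Q then ?B1 else ?B0)"
      if "fixpt I phi ?B1 \<le> x'" "x' \<le> fixpt I phi ?B0" "?psi True x' \<le> Q" "Q < ?psi False x'" for x' Q
      using winR[OF p] that by simp
    show "morph ?B0 ?B1 (True # False # w') = ?T @ ?X" using RM by (simp add: replicate_append_same)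
    show "True # False # ?w = ?X @ ?T" by simp
    show "morph ?B0 ?B1 (False # True # w') = ?T @ ?Y" using RM by simp
    show "False # True # ?w = ?Y @ ?T" by simp
    show "take (Suc (length ?T)) (True # False # ?w) = True # ?T" by simp
    show "Suc (length ?T) < length (True # False # ?w)" by simp
    show "\<not> (True # False # ?w) ! Suc (length ?T)"
      using hdM by (cases ?M) (auto simp: nth_append)
    show "\<forall>x'\<in>I. (\<forall>m. good ?psi x' x' (upow (True # False # w') m)) \<longleftrightarrow>
               x' \<in> {fixpt I ?psi (False # True # w') .. fixpt I ?psi (True # False # w')}"
      using IH psiA2 unfolding Core_def by blast
  qed
qed

lemma core_base0: "1 \<le> q \<Longrightarrow> Core (replicate (q - 1) False)"
  unfolding Core_def using sys.base0 sys.intro by blast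

lemma core_base1: "1 \<le> q \<Longrightarrow> Core (replicate (q - 1) True)"
  unfolding Core_def using sys.base1 sys.intro by blast

lemma core: "valid V \<Longrightarrow> V = False # w @ [True] \<Longrightarrow> Core w"
proof (induction V arbitrary: w rule: valid.induct)
  case (validL W p)
  have LM: "Lmor p = morph (replicate (Suc p) False @ [True]) (replicate p False @ [True])" by (rule Lmor_morph)
  from valid_form[OF validL.hyps(1)] show ?case
  proof (elim disjE exE)
    assume "W = [False]"
    then have "False # w @ [True] = replicate (Suc p) False @ [True]" using validL.prems LM by simp
    then have "w = replicate (Suc p - 1) False" by simp
    then show ?thesis using core_base0[of "Suc p"] by simp
  next
    assume "W = [True]"
    then have "False # w @ [True] = replicate p False @ [True]" using validL.prems LM by simp
    moreover obtain k where "p = Suc k" using validL.hyps(2) by (cases p) auto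
    ultimately have "w = replicate (p - 1) False" by simp
    then show ?thesis using core_base0[of p] validL.hyps(2) by simp
  next
    fix w' assume W: "W = False # w' @ [True]"
    have "False # w @ [True] = (replicate (Suc p) False @ [True]) @ Lmor p w' @ (replicate p False @ [True])"
      using validL.prems W LM by simp
    then have "w = replicate p False @ [True] @ Lmor p w' @ replicate p False" by simp
    then show ?thesis using core_L[OF validL.hyps(2)] validL.IH W by simp
  qed
next
  case (validR W p)
  have RM: "Rmor p = morph (False # replicate p True) (False # replicate (Suc p) True)" by (rule Rmor_morph)
  from valid_form[OF validR.hyps(1)] show ?case
  proof (elim disjE exE)
    assume "W = [False]"
    then have e: "w @ [True] = replicate p True" using validR.prems RM by simp
    obtain k where pk: "p = Suc k" using validR.hyps(2) by (cases p) auto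
    have "w @ [True] = replicate (Suc k) True" using e unfolding pk .
    then have "w = replicate k True" by (simp only: snoc_rep)
    then have "w = replicate (p - 1) True" using pk by simp
    then show ?thesis using core_base1[of p] validR.hyps(2) by simp
  next
    assume "W = [True]"
    then have "False # w @ [True] = False # replicate (Suc p) True" using validR.prems RM by simp
    then have "w @ [True] = replicate (Suc p) True" by (metis list.inject)
    then have "w = replicate p True" by (simp only: snoc_rep)
    then have "w = replicate (Suc p - 1) True" by simp
    then show ?thesis using core_base1[of "Suc p"] by simp
  next
    fix w' assume W: "W = False # w' @ [True]"
    have "False # w @ [True] = (False # replicate p True) @ Rmor p w' @ (False # replicate (Suc p) True)"
      using validR.prems W RM by simp
    then have "w = replicate p True @ Rmor p w' @ False # replicate p True"
      by (simp only: rep_Suc_snoc) simp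
    then show ?thesis using core_R[OF validR.hyps(2)] validR.IH W by simp
  qed
qed auto

abbreviation n0 :: "word \<Rightarrow> nat" where "n0 V \<equiv> length (filter (\<lambda>b. \<not> b) V)"
abbreviation n1 :: "word \<Rightarrow> nat" where "n1 V \<equiv> length (filter (\<lambda>b. b) V)"

lemma counts_L: "n1 (Lmor p W) = length W \<and> n0 (Lmor p W) = p * length W + n0 W"
  by (induction W) (auto simp: Lmor_def)

lemma counts_R: "n0 (Rmor p W) = length W \<and> n1 (Rmor p W) = p * length W + n1 W"
  by (induction W) (auto simp: Rmor_def)

lemma len_split: "length W = n0 W + n1 W"
  by (induction W) auto

lemma gcd_aux: "gcd (p * (a + b) + a) (a + b) = gcd a (b::nat)"
proof -
  have "gcd (p * (a + b) + a) (a + b) = gcd a (a + b)"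
    by (metis gcd.commute gcd_add_mult add.commute mult.commute)
  also have "\<dots> = gcd a b" by (metis gcd_add2 add.commute)
  finally show ?thesis .
qed

lemma valid_coprime: "valid V \<Longrightarrow> coprime (n0 V) (n1 V)"
proof (induction rule: valid.induct)
  case (validL w p)
  have "gcd (n0 (Lmor p w)) (n1 (Lmor p w)) = gcd (p * (n0 w + n1 w) + n0 w) (n0 w + n1 w)"
    using counts_L[of p w] len_split[of w] by simp
  also have "\<dots> = gcd (n0 w) (n1 w)" by (rule gcd_aux)
  finally show ?case using validL.IH by (simp add: coprime_iff_gcd_eq_1)
next
  case (validR w p)
  have "gcd (n1 (Rmor p w)) (n0 (Rmor p w)) = gcd (p * (n1 w + n0 w) + n1 w) (n1 w + n0 w)"
    using counts_R[of p w] len_split[of w] by (simp add: add.commute)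
  also have "\<dots> = gcd (n1 w) (n0 w)" by (rule gcd_aux)
  finally show ?case using validR.IH by (simp add: coprime_iff_gcd_eq_1 gcd.commute)
qed auto

lemma filter_upow: "length (filter P (upow z k)) = k * length (filter P z)"
  by (induction k) (auto simp: upow_Suc)

lemma per_mult: "(\<forall>i. f (i + r) = f i) \<Longrightarrow> f (i + r * c) = f (i::nat)"
proof (induction c)
  case (Suc c)
  have "f (i + r * Suc c) = f ((i + r * c) + r)" by (simp add: algebra_simps)
  then show ?case using Suc by simp
qed simp

lemma per_mod: "(\<forall>i. f (i + r) = f i) \<Longrightarrow> f i = f (i mod (r::nat))"
  using per_mult[of f r "i mod r" "i div r"] by (metis mod_mult_div_eq add.commute mult.commute)

lemma primitive_min:
  fixes f :: "nat \<Rightarrow> bool"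
  assumes V: "V \<noteq> []" "coprime (n0 V) (n1 V)"
    and fV: "\<forall>i. f i = V ! (i mod length V)"
    and q: "q \<noteq> []" "\<forall>i. f i = q ! (i mod length q)" "q \<noteq> V"
  shows "length V < length q"
proof (rule ccontr)
  assume "\<not> length V < length q"
  then have rn: "length q \<le> length V" by simp
  let ?n = "length V" and ?r = "length q"
  have pn: "\<forall>i. f (i + ?n) = f i" using fV by simp
  have pr: "\<forall>i. f (i + ?r) = f i" using q(2) by simp
  show False
  proof (cases "?r = ?n")
    case True
    have "V = q"
    proof (rule nth_equalityI)
      show "length V = length q" using True by simp
      fix i assume "i < length V"
      then show "V ! i = q ! i" using fV q(2) True by (metis mod_less)
    qed
    then show False using q(3) by simp
  next
    case False
    then have rlt: "?r < ?n" using rn by simp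
    define g where "g = gcd ?r ?n"
    have r0: "?r \<noteq> 0" using q(1) by simp
    obtain a b where ab: "?r * a = ?n * b + g" using bezout_nat[OF r0, of ?n] g_def by blast
    have pg: "\<forall>i. f (i + g) = f i"
    proof
      fix i
      have "f (i + g) = f (i + g + ?n * b)" using per_mult[OF pn] by simp
      also have "\<dots> = f (i + ?r * a)" using ab by (simp add: algebra_simps)
      also have "\<dots> = f i" using per_mult[OF pr] by simp
      finally show "f (i + g) = f i" .
    qed
    have gpos: "0 < g" using r0 g_def by simp
    have gdvd: "g dvd ?n" using g_def by simp
    have gle: "g \<le> ?r" using g_def r0 by (simp add: gcd_le1_nat)
    define k where "k = ?n div g"
    have nk: "?n = k * g" using gdvd k_def by simp
    have k2: "2 \<le> k"
    proof (rule ccontr)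
      assume "\<not> 2 \<le> k"
      then have "k \<le> 1" by simp
      then have "?n \<le> g" using nk by (cases k) auto
      then show False using gle rlt by simp
    qed
    have Veq: "V = upow (take g V) k"
    proof (rule nth_equalityI)
      have "length (take g V) = g" using gle rlt by simp
      then show "length V = length (upow (take g V) k)" using nk by simp
      fix i assume i: "i < length V"
      have lt: "length (take g V) = g" using gle rlt by simp
      have "upow (take g V) k ! i = take g V ! (i mod g)"
        using upow_nth[of i k "take g V"] lt i nk by simp
      also have "\<dots> = V ! (i mod g)" using gpos by simp
      also have "\<dots> = f (i mod g)"
      proof -
        have "i mod g < g" using gpos by simp
        then have "i mod g < length V" using gle rlt by linarith
        then show ?thesis using fV by simp
      qed
      also have "\<dots> = f i" using per_mod[OF pg] by simp
      also have "\<dots> = V ! i" using fV i by simp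
      finally show "V ! i = upow (take g V) k ! i" by simp
    qed
    have "n0 V = k * n0 (take g V)" "n1 V = k * n1 (take g V)"
      using filter_upow Veq by metis+
    then have kd: "k dvd gcd (n0 V) (n1 V)" by simp
    have g1: "gcd (n0 V) (n1 V) = 1" using V(2) by (simp add: coprime_iff_gcd_eq_1)
    have "k dvd 1" using kd unfolding g1 .
    then show False using k2 by simp
  qed
qed

context sys begin

lemma iter_phi: "(phiw phi [c] ^^ m) z = (phi c ^^ m) z"
proof -
  have "phiw phi [c] = phi c" by (simp add: fun_eq_iff)
  then show ?thesis by simp
qed

lemma no_both: assumes z: "z \<in> I" and e: "\<forall>m. (phi True ^^ m) z = (phi False ^^ m) z" shows False
proof -
  have f1: "fixpt I phi [True] = y1" using fixpt_eq[of "[True]" y1] y1I fix1 by simp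
  have f0: "fixpt I phi [False] = y0" using fixpt_eq[of "[False]" y0] y0I fix0 by simp
  have "(\<lambda>m. (phi True ^^ m) z) \<longlonglongrightarrow> y1" using iter_conv[of "[True]" z] z f1 iter_phi by simp
  moreover have "(\<lambda>m. (phi False ^^ m) z) \<longlonglongrightarrow> y0" using iter_conv[of "[False]" z] z f0 iter_phi by simp
  ultimately have "y1 = y0" using e LIMSEQ_unique by simp
  then show False using y10 by simp
qed

lemma orbit_iter: "(\<forall>k\<ge>1. t (Suc k) = phi c (t k)) \<Longrightarrow> t (Suc m) = (phi c ^^ m) (t 1)"
  by (induction m) auto

lemma thr_I: "x \<in> I \<Longrightarrow> thr_orbit phi x k \<in> I"
  by (induction k) (auto simp: maps)

lemma mor0: assumes xI: "x \<in> I" and x0: "y0 \<le> x" shows "is_threshold_word phi x [False]"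
proof -
  let ?t = "thr_orbit phi x"
  have lt: "k \<ge> 1 \<Longrightarrow> ?t k < x" for k
  proof (induction k rule: dec_induct)
    case base
    have "y1 < x" using y10 x0 by simp
    then show ?case using phi1_lt[OF xI] by simp
  next
    case (step k)
    have tI: "?t k \<in> I" using thr_I xI by blast
    have "phi False (?t k) < x"
    proof (cases "?t k < y0")
      case True
      then have "phi False (?t k) < phi False y0" using mono1 tI y0I by blast
      then show ?thesis using fix0 x0 by simp
    next
      case False
      then show ?thesis using phi0_le[OF tI] step by force
    qed
    then show ?case using step by simp
  qed
  have gen: "generates phi x [False]" unfolding generates_def
  proof (intro conjI allI impI)
    fix k :: nat assume k1: "1 \<le> k"
    have "\<not> x \<le> ?t k" using lt[OF k1] by simp
    then show "?t (Suc k) = phi ([False] ! ((k - 1) mod length [False])) (?t k)" by simp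
  qed simp
  show ?thesis unfolding is_threshold_word_def
  proof (intro conjI allI impI gen)
    fix q assume h: "generates phi x q \<and> q \<noteq> [False]"
    show "length [False] < length q"
    proof (rule ccontr)
      assume "\<not> length [False] < length q"
      moreover have "q \<noteq> []" using h unfolding generates_def by blast
      ultimately obtain c where qc: "q = [c]" by (cases q) auto
      then have c: "c = True" using h by simp
      have e1: "\<forall>k\<ge>1. ?t (Suc k) = phi True (?t k)" using h qc c unfolding generates_def by simp
      have e0: "\<forall>k\<ge>1. ?t (Suc k) = phi False (?t k)"
      proof (intro allI impI)
        fix k :: nat assume "1 \<le> k"
        then have "\<not> x \<le> ?t k" using lt by force
        then show "?t (Suc k) = phi False (?t k)" by simp
      qed
      have "\<forall>m. (phi True ^^ m) (?t 1) = (phi False ^^ m) (?t 1)"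
        using orbit_iter[OF e1] orbit_iter[OF e0] by metis
      then show False using no_both thr_I xI by blast
    qed
  qed
qed

lemma mor1: assumes xI: "x \<in> I" and x1: "x \<le> y1" shows "is_threshold_word phi x [True]"
proof -
  let ?t = "thr_orbit phi x"
  have ge: "x \<le> ?t k" for k
  proof (induction k)
    case 0 then show ?case by simp
  next
    case (Suc k)
    have tI: "?t k \<in> I" using thr_I xI by blast
    have "x \<le> phi True (?t k)"
    proof (cases "?t k \<le> y1")
      case True
      then show ?thesis using phi1_ge[OF tI] Suc by force
    next
      case False
      then have "phi True y1 \<le> phi True (?t k)" using phiw_le[where W="[True]", OF y1I tI] by simp
      then show ?thesis using fix1 x1 by simp
    qed
    then show ?case using Suc by simp
  qed
  have gen: "generates phi x [True]" unfolding generates_def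
  proof (intro conjI allI impI)
    fix k :: nat assume "1 \<le> k"
    then show "?t (Suc k) = phi ([True] ! ((k - 1) mod length [True])) (?t k)" using ge by simp
  qed simp
  show ?thesis unfolding is_threshold_word_def
  proof (intro conjI allI impI gen)
    fix q assume h: "generates phi x q \<and> q \<noteq> [True]"
    show "length [True] < length q"
    proof (rule ccontr)
      assume "\<not> length [True] < length q"
      moreover have "q \<noteq> []" using h unfolding generates_def by blast
      ultimately obtain c where qc: "q = [c]" by (cases q) auto
      then have c: "c = False" using h by simp
      have e0: "\<forall>k\<ge>1. ?t (Suc k) = phi False (?t k)" using h qc c unfolding generates_def by simp
      have e1: "\<forall>k\<ge>1. ?t (Suc k) = phi True (?t k)" using ge by simp
      have "\<forall>m. (phi True ^^ m) (?t 1) = (phi False ^^ m) (?t 1)"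
        using orbit_iter[OF e1] orbit_iter[OF e0] by metis
      then show False using no_both thr_I xI by blast
    qed
  qed
qed

end

lemma uV_nth:
  assumes k: "1 \<le> k"
  shows "(True # False # w) ! (k mod length (False # w @ [True])) =
         (False # w @ [True]) ! ((k - 1) mod length (False # w @ [True]))"
proof -
  let ?n = "length (False # w @ [True])"
  define j where "j = (k - 1) mod ?n"
  have kS: "k = Suc (k - 1)" using k by simp
  have km: "k mod ?n = (if Suc j = ?n then 0 else Suc j)"
    unfolding j_def by (subst kS, subst mod_Suc) simp
  have jn: "j < ?n" unfolding j_def by simp
  have "(True # False # w) ! (k mod ?n) = (False # w @ [True]) ! j"
  proof (cases "Suc j = ?n")
    case True
    then have jj: "j = Suc (length w)" by simp
    have "(False # w @ [True]) ! Suc (length w) = True" by (simp add: nth_append)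
    then show ?thesis using km True jj by simp
  next
    case False
    then have jl: "j < length (False # w)" using jn by simp
    have "(False # w @ [True]) ! j = (False # w) ! j"
      using jl by (metis append_Cons nth_append)
    then show ?thesis using km False by simp
  qed
  then show ?thesis unfolding j_def .
qed

theorem proposition2:
  fixes I :: "real set" and phi :: "bool \<Rightarrow> real \<Rightarrow> real" and y0 y1 :: real
  assumes "A2 I phi y0 y1"
  shows "(\<forall>w x. valid (False # w @ [True]) \<longrightarrow> x \<in> I \<longrightarrow>
            (is_threshold_word phi x (False # w @ [True]) \<longleftrightarrow>
             x \<in> {fixpt I phi ([False, True] @ w) .. fixpt I phi ([True, False] @ w)}))
       \<and> (\<forall>x\<in>I. y0 \<le> x \<longrightarrow> is_threshold_word phi x [False])
       \<and> (\<forall>x\<in>I. x \<le> y1 \<longrightarrow> is_threshold_word phi x [True])"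
proof -
  interpret sys I phi y0 y1 using assms by unfold_locales
  have M0: "\<forall>x\<in>I. y0 \<le> x \<longrightarrow> is_threshold_word phi x [False]" using mor0 by blast
  have M1: "\<forall>x\<in>I. x \<le> y1 \<longrightarrow> is_threshold_word phi x [True]" using mor1 by blast
  have main: "\<forall>w x. valid (False # w @ [True]) \<longrightarrow> x \<in> I \<longrightarrow>
            (is_threshold_word phi x (False # w @ [True]) \<longleftrightarrow>
             x \<in> {fixpt I phi ([False, True] @ w) .. fixpt I phi ([True, False] @ w)})"
  proof (intro allI impI)
    fix w x assume v: "valid (False # w @ [True])" and xI: "x \<in> I"
    let ?V = "False # w @ [True]" and ?u = "True # False # w"
    let ?a = "fixpt I phi ?u" and ?b = "fixpt I phi (False # True # w)"
    let ?n = "length ?V"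
    let ?t = "thr_orbit phi x"
    have C: "(\<forall>m. good phi x x (upow ?u m)) \<longleftrightarrow> x \<in> {?b .. ?a}"
      using core[OF v refl] assms xI unfolding Core_def by blast
    have a_lt: "?a < y0" using fixpt_lt_y0 by simp
    have b_gt: "y1 < ?b" using fixpt_gt_y1 by simp
    have goal_eq: "{fixpt I phi ([False, True] @ w) .. fixpt I phi ([True, False] @ w)} = {?b .. ?a}" by simp
    have R: "is_threshold_word phi x ?V \<longleftrightarrow> x \<in> {?b .. ?a}"
    proof (cases "y0 \<le> x")
      case True
      have "generates phi x [False]" using M0 xI True unfolding is_threshold_word_def by blast
      then have "\<not> is_threshold_word phi x ?V" unfolding is_threshold_word_def by force
      moreover have "x \<notin> {?b .. ?a}" using a_lt True by auto
      ultimately show ?thesis by simp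
    next
      case False
      then have x0: "x < y0" by simp
      show ?thesis
      proof (cases "x \<le> y1")
        case True
        have "generates phi x [True]" using M1 xI True unfolding is_threshold_word_def by blast
        then have "\<not> is_threshold_word phi x ?V" unfolding is_threshold_word_def by force
        moreover have "x \<notin> {?b .. ?a}" using b_gt True by auto
        ultimately show ?thesis by simp
      next
        case False
        then have x1: "y1 < x" by simp
        have box: "y1 \<le> ?t k \<and> ?t k \<le> y0" for k
          by (induction k) (use x0 x1 phi_box in auto)
        have gen_iff: "generates phi x q \<longleftrightarrow> q \<noteq> [] \<and> (\<forall>k\<ge>1. (x \<le> ?t k) = q ! ((k - 1) mod length q))" for q
        proof -
          have eqv: "phi a z = phi b z \<longleftrightarrow> a = b" if "y1 \<le> z" "z \<le> y0" for a b z
            using phi_sep[OF that] by (cases a; cases b) auto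
          have "?t (Suc k) = phi c (?t k) \<longleftrightarrow> (x \<le> ?t k) = c" for k c
            using eqv[OF box[of k, THEN conjunct1] box[of k, THEN conjunct2], of "x \<le> ?t k" c] by simp
          then show ?thesis unfolding generates_def by metis
        qed
        have link1: "(\<forall>m. good phi x x (upow ?u m)) \<longleftrightarrow> (\<forall>k. (x \<le> ?t k) = ?u ! (k mod ?n))"
        proof
          assume G: "\<forall>m. good phi x x (upow ?u m)"
          show "\<forall>k. (x \<le> ?t k) = ?u ! (k mod ?n)"
          proof
            fix k
            have kl: "k < Suc k * length ?u" by simp
            have "(x \<le> ?t k) = upow ?u (Suc k) ! k" using G[rule_format, of "Suc k"] kl
              unfolding thr_good length_upow by blast
            then show "(x \<le> ?t k) = ?u ! (k mod ?n)" using upow_nth[OF kl] by simp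
          qed
        next
          assume H: "\<forall>k. (x \<le> ?t k) = ?u ! (k mod ?n)"
          show "\<forall>m. good phi x x (upow ?u m)"
          proof
            fix m
            show "good phi x x (upow ?u m)" unfolding thr_good
            proof (intro allI impI)
              fix k assume "k < length (upow ?u m)"
              then show "(x \<le> ?t k) = upow ?u m ! k" using H upow_nth[of k m ?u] by simp
            qed
          qed
        qed
        have link2: "(\<forall>k. (x \<le> ?t k) = ?u ! (k mod ?n)) \<longleftrightarrow> (\<forall>k\<ge>1. (x \<le> ?t k) = ?V ! ((k - 1) mod ?n))"
        proof
          assume H: "\<forall>k. (x \<le> ?t k) = ?u ! (k mod ?n)"
          show "\<forall>k\<ge>1. (x \<le> ?t k) = ?V ! ((k - 1) mod ?n)" using H uV_nth by metis
        next
          assume H: "\<forall>k\<ge>1. (x \<le> ?t k) = ?V ! ((k - 1) mod ?n)"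
          show "\<forall>k. (x \<le> ?t k) = ?u ! (k mod ?n)"
          proof
            fix k show "(x \<le> ?t k) = ?u ! (k mod ?n)"
            proof (cases "k = 0")
              case True then show ?thesis by simp
            next
              case False then show ?thesis using H uV_nth[of k w] by simp
            qed
          qed
        qed
        have genV: "generates phi x ?V \<longleftrightarrow> x \<in> {?b .. ?a}"
          using gen_iff[of ?V] link1 link2 C by simp
        have cop: "coprime (n0 ?V) (n1 ?V)" using valid_coprime[OF v] .
        have thrV: "is_threshold_word phi x ?V \<longleftrightarrow> generates phi x ?V"
        proof
          assume "is_threshold_word phi x ?V" then show "generates phi x ?V"
            unfolding is_threshold_word_def by blast
        next
          assume g: "generates phi x ?V"
          show "is_threshold_word phi x ?V" unfolding is_threshold_word_def
          proof (intro conjI allI impI g)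
            fix q assume hq: "generates phi x q \<and> q \<noteq> ?V"
            let ?f = "\<lambda>i. x \<le> ?t (Suc i)"
            have fV: "\<forall>i. ?f i = ?V ! (i mod ?n)"
              using g[unfolded gen_iff] by (metis diff_Suc_1 le_add1 plus_1_eq_Suc)
            have qn: "q \<noteq> []" using hq gen_iff by blast
            have fq: "\<forall>i. ?f i = q ! (i mod length q)"
              using hq[THEN conjunct1, unfolded gen_iff] by (metis diff_Suc_1 le_add1 plus_1_eq_Suc)
            show "length ?V < length q"
              using primitive_min[of ?V ?f q] cop fV qn fq hq by simp
          qed
        qed
        show ?thesis using thrV genV by simp
      qed
    qed
    then show "is_threshold_word phi x ?V \<longleftrightarrow>
             x \<in> {fixpt I phi ([False, True] @ w) .. fixpt I phi ([True, False] @ w)}"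
      using goal_eq by simp
  qed
  show ?thesis using main M0 M1 by blast
qed

end
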